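(* Under the standing assumptions of the context, for every integer $\ell\ge1$ the recurrence rate $\mathrm{RR}_\ell(x,\infty,1/2)=\lim_{n\to\infty}\mathrm{RR}_\ell(x,n,1/2)$ exists and \[ \mathrm{RR}_\ell(x,\infty,1/2)=\sum_{l=\ell}^\infty l\,d(\mathcal K_l)>0 . \]
   Context: Standing assumptions: $A=\{0,1\}$, $\Sigma=A^{\mathbb N_0}$ with metric $\rho(y,z)=2^{-\min\{i\ge0:\,y_i\ne z_i\}}$ ($y\ne z$) and shift $\sigma$. $\zeta:A\to A^*$ is a binary substitution of constant length $q\ge2$, primitive, aperiodic (its subshift $X_\zeta$ contains a non-$\sigma$-periodic sequence), with $\zeta(0)$ starting with $0$; $x=\lim_k\zeta^k(0)$ its fixed point starting with $0$. For $n\in\mathbb N\cup\{\infty\}$, $n\ge2$, the recurrence plot $R(x,n,1/2)$ has indices $0\le i,j<n$ and entry $1$ iff $x_i=x_j$. A line of length $\ell$: $(i,j,\ell)$ with $0\le i,j\le n-\ell$, $i\ne j$, entries $(i+k,j+k)=1$ for $0\le k<\ell$, entry $(i-1,j-1)=0$ if $\min\{i,j\}>0$, entry $(i+\ell,j+\ell)=0$ if $\max\{i,j\}<n-\ell$ (always required for $n=\infty$); inner if $\min\{i,j\}>0$ and (for finite $n$) $\max\{i,j\}<n-\ell$. For finite $n$: $N_\ell$ = number of all lines of length exactly $\ell$, $\lambda_\ell=N_\ell/(n^2-n)$, $\mathrm{RR}_\ell(x,n,1/2)=\sum_{l\ge\ell}l\lambda_l$. $\mathcal K_l=\{(i,j)\in\mathbb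 N^2:(i,j,l)\text{ inner line in }R(x,\infty,1/2)\}$; $d(M)=\lim_n n^{-2}\#(M\cap[0,n)^2)$ is the asymptotic density, and it is known that $d(\mathcal K_l)$ exists for all $l$. *)

theory Defs
  imports Complex_Main
begin

text \<open>Alphabet A = {0,1} is encoded as bool: False = 0, True = 1.
  Sequences in Sigma are functions nat => bool.\<close>

definition subst_word :: "(bool \<Rightarrow> bool list) \<Rightarrow> bool list \<Rightarrow> bool list" where
  "subst_word \<zeta> w = concat (map \<zeta> w)"

definition subst_iter :: "(bool \<Rightarrow> bool list) \<Rightarrow> nat \<Rightarrow> bool \<Rightarrow> bool list" where
  "subst_iter \<zeta> k a = (subst_word \<zeta> ^^ k) [a]"

definition const_length :: "(bool \<Rightarrow> bool list) \<Rightarrow> nat \<Rightarrow> bool" where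
  "const_length \<zeta> q \<longleftrightarrow> (\<forall>a. length (\<zeta> a) = q)"

definition primitive_subst :: "(bool \<Rightarrow> bool list) \<Rightarrow> bool" where
  "primitive_subst \<zeta> \<longleftrightarrow> (\<exists>k\<ge>1. \<forall>a b. b \<in> set (subst_iter \<zeta> k a))"

definition is_factor :: "'a list \<Rightarrow> 'a list \<Rightarrow> bool" where
  "is_factor w v \<longleftrightarrow> (\<exists>u1 u2. v = u1 @ w @ u2)"

definition subst_language :: "(bool \<Rightarrow> bool list) \<Rightarrow> bool list set" where
  "subst_language \<zeta> = {w. \<exists>k a. is_factor w (subst_iter \<zeta> k a)}"

definition subshift :: "(bool \<Rightarrow> bool list) \<Rightarrow> (nat \<Rightarrow> bool) set" where
  "subshift \<zeta> = {y. \<forall>i m. map y [i..<i+m] \<in> subst_language \<zeta>}"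

definition shift_periodic :: "(nat \<Rightarrow> 'a) \<Rightarrow> bool" where
  "shift_periodic y \<longleftrightarrow> (\<exists>p>0. \<forall>i. y (i + p) = y i)"

definition aperiodic_subst :: "(bool \<Rightarrow> bool list) \<Rightarrow> bool" where
  "aperiodic_subst \<zeta> \<longleftrightarrow> (\<exists>y\<in>subshift \<zeta>. \<not> shift_periodic y)"

text \<open>x is the fixed point lim_k zeta^k(0): it agrees with every zeta^k(0) on its length.\<close>
definition is_fixed_point_of_0 :: "(bool \<Rightarrow> bool list) \<Rightarrow> (nat \<Rightarrow> bool) \<Rightarrow> bool" where
  "is_fixed_point_of_0 \<zeta> x \<longleftrightarrow>
     (\<forall>k i. i < length (subst_iter \<zeta> k False) \<longrightarrow> x i = subst_iter \<zeta> k False ! i)"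

text \<open>Line (i,j,l) in the finite recurrence plot R(x,n,1/2) (entry 1 iff x_i = x_j).\<close>
definition is_line_fin :: "(nat \<Rightarrow> bool) \<Rightarrow> nat \<Rightarrow> nat \<Rightarrow> nat \<Rightarrow> nat \<Rightarrow> bool" where
  "is_line_fin x n i j l \<longleftrightarrow>
     i + l \<le> n \<and> j + l \<le> n \<and> i \<noteq> j \<and>
     (\<forall>k<l. x (i + k) = x (j + k)) \<and>
     (min i j > 0 \<longrightarrow> x (i - 1) \<noteq> x (j - 1)) \<and>
     (max i j + l < n \<longrightarrow> x (i + l) \<noteq> x (j + l))"

definition N_lines :: "(nat \<Rightarrow> bool) \<Rightarrow> nat \<Rightarrow> nat \<Rightarrow> nat" where
  "N_lines x n l = card {(i, j). i < n \<and> j < n \<and> is_line_fin x n i j l}"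

definition lambda_l :: "(nat \<Rightarrow> bool) \<Rightarrow> nat \<Rightarrow> nat \<Rightarrow> real" where
  "lambda_l x n l = real (N_lines x n l) / (real n ^ 2 - real n)"

text \<open>RR_ell(x,n,1/2) = sum_{l >= ell} l lambda_l (lines have length at most n).\<close>
definition RR_fin :: "(nat \<Rightarrow> bool) \<Rightarrow> nat \<Rightarrow> nat \<Rightarrow> real" where
  "RR_fin x ell n = (\<Sum>l\<in>{ell..n}. real l * lambda_l x n l)"

definition is_inner_line_inf :: "(nat \<Rightarrow> bool) \<Rightarrow> nat \<Rightarrow> nat \<Rightarrow> nat \<Rightarrow> bool" where
  "is_inner_line_inf x i j l \<longleftrightarrow>
     i \<noteq> j \<and> min i j > 0 \<and>
     (\<forall>k<l. x (i + k) = x (j + k)) \<and>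
     x (i - 1) \<noteq> x (j - 1) \<and> x (i + l) \<noteq> x (j + l)"

definition K_set :: "(nat \<Rightarrow> bool) \<Rightarrow> nat \<Rightarrow> (nat \<times> nat) set" where
  "K_set x l = {(i, j). is_inner_line_inf x i j l}"

definition asymp_density :: "(nat \<times> nat) set \<Rightarrow> real" where
  "asymp_density M = lim (\<lambda>n. real (card (M \<inter> ({..<n} \<times> {..<n}))) / real n ^ 2)"

end

theory Submission
  imports Defs
begin


lemma subst_word_append: "subst_word z (u @ v) = subst_word z u @ subst_word z v"
  by (simp add: subst_word_def)

lemma funpow_subst_word: "(subst_word z ^^ N) xs = concat (map (\<lambda>a. (subst_word z ^^ N) [a]) xs)"
proof (induction N arbitrary: xs)
  case 0 then show ?case by (induction xs) auto
next
  case (Suc N)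
  have "(subst_word z ^^ Suc N) xs = subst_word z ((subst_word z ^^ N) xs)" by simp
  also have "\<dots> = subst_word z (concat (map (\<lambda>a. (subst_word z ^^ N) [a]) xs))" using Suc by metis
  also have "\<dots> = concat (map (\<lambda>a. subst_word z ((subst_word z ^^ N) [a])) xs)"
    by (induction xs) (auto simp: subst_word_def)
  finally show ?case by simp
qed

lemma subst_iter_add: "subst_iter z (N + k) a = concat (map (subst_iter z N) (subst_iter z k a))"
proof -
  have "subst_iter z (N + k) a = (subst_word z ^^ N) ((subst_word z ^^ k) [a])"
    by (simp add: subst_iter_def funpow_add)
  also have "\<dots> = concat (map (subst_iter z N) (subst_iter z k a))"
  proof -
    have e: "subst_iter z N = (\<lambda>a. (subst_word z ^^ N) [a])" by (rule ext) (simp add: subst_iter_def)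
    show ?thesis by (subst funpow_subst_word) (simp add: subst_iter_def e)
  qed
  finally show ?thesis .
qed

lemma length_subst_word: "const_length z q \<Longrightarrow> length (subst_word z u) = q * length u"
  by (induction u) (auto simp: subst_word_def const_length_def)

lemma length_subst_iter: "const_length z q \<Longrightarrow> length (subst_iter z k a) = q ^ k"
proof (induction k)
  case 0 then show ?case by (simp add: subst_iter_def)
next
  case (Suc k)
  then show ?case by (simp add: subst_iter_def length_subst_word)
qed

lemma concat_nth_const: "(\<forall>y\<in>set xs. length (f y) = Q) \<Longrightarrow> t < length xs \<Longrightarrow> r < Q
  \<Longrightarrow> concat (map f xs) ! (t * Q + r) = f (xs ! t) ! r"
proof (induction xs arbitrary: t)
  case Nil then show ?case by simp
next
  case (Cons y xs)
  show ?case
  proof (cases t)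
    case 0 then show ?thesis using Cons by (simp add: nth_append)
  next
    case (Suc t')
    have "concat (map f (y # xs)) ! (t * Q + r) = concat (map f xs) ! (t' * Q + r)"
      using Cons.prems Suc by (simp add: nth_append)
    then show ?thesis using Cons Suc by simp
  qed
qed

lemma subst_iter_block:
  assumes "const_length z q" "t < q ^ k" "r < q ^ N"
  shows "subst_iter z (N + k) a ! (t * q ^ N + r) = subst_iter z N (subst_iter z k a ! t) ! r"
  using assms by (simp add: subst_iter_add concat_nth_const length_subst_iter)

lemma fp_block:
  assumes cl: "const_length z q" and q: "q \<ge> 2" and fp: "is_fixed_point_of_0 z x" and r: "r < q ^ N"
  shows "x (t * q ^ N + r) = subst_iter z N (x t) ! r"
proof -
  have "t < q ^ t"
  proof -
    have "t < 2 ^ t" by (rule less_exp)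
    also have "(2::nat) ^ t \<le> q ^ t" using q by (rule power_mono) simp
    finally show ?thesis .
  qed
  then obtain k where k: "t < q ^ k" by blast
  have lt: "t * q ^ N + r < q ^ (N + k)"
  proof -
    have "t * q ^ N + r < t * q ^ N + q ^ N" using r by simp
    also have "\<dots> = (t + 1) * q ^ N" by simp
    also have "\<dots> \<le> q ^ k * q ^ N" using k by (intro mult_right_mono) auto
    finally show ?thesis by (simp add: power_add mult.commute)
  qed
  have "x (t * q ^ N + r) = subst_iter z (N + k) False ! (t * q ^ N + r)"
    using fp lt cl by (simp add: is_fixed_point_of_0_def length_subst_iter)
  also have "\<dots> = subst_iter z N (subst_iter z k False ! t) ! r"
    using subst_iter_block[OF cl k r] .
  also have "subst_iter z k False ! t = x t"
    using fp k cl by (simp add: is_fixed_point_of_0_def length_subst_iter)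
  finally show ?thesis .
qed


locale sfp =
  fixes z :: "bool \<Rightarrow> bool list" and q :: nat and x :: "nat \<Rightarrow> bool"
  assumes q2: "q \<ge> 2" and cl: "const_length z q" and prim: "primitive_subst z"
    and aper: "aperiodic_subst z" and fp: "is_fixed_point_of_0 z x"
begin

lemma qpos: "q > 0" using q2 by simp

lemma blk: "r < q ^ N \<Longrightarrow> x (t * q ^ N + r) = subst_iter z N (x t) ! r"
  using fp_block[OF cl q2 fp] .

lemma x0: "x 0 = False"
  using fp[unfolded is_fixed_point_of_0_def, rule_format, of 0 0] by (simp add: subst_iter_def)

lemma blk0: assumes "x u = False" "r < q ^ N" shows "x (u * q ^ N + r) = x r"
proof -
  have "x (u * q ^ N + r) = subst_iter z N False ! r" using blk[OF assms(2)] assms(1) by simp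
  also have "\<dots> = x (0 * q ^ N + r)" using blk[OF assms(2), of 0] x0 by simp
  finally show ?thesis by simp
qed

lemma primK: obtains K where "K \<ge> 1" "\<And>a b. b \<in> set (subst_iter z K a)"
  using prim unfolding primitive_subst_def by blast

lemma letter_in_block:
  assumes "\<And>a b. b \<in> set (subst_iter z K a)"
  shows "\<exists>s<q ^ K. x (t * q ^ K + s) = b"
proof -
  have "b \<in> set (subst_iter z K (x t))" using assms by blast
  then obtain s where s: "s < length (subst_iter z K (x t))" "subst_iter z K (x t) ! s = b"
    by (metis in_set_conv_nth)
  then have "s < q ^ K" using length_subst_iter[OF cl] by simp
  then show ?thesis using s blk by metis
qed

lemma UR: "\<exists>R>0. \<forall>s. \<exists>i. s \<le> i \<and> i < s + R \<and> (\<forall>k<m. x (i + k) = x k)"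
proof -
  obtain K where K: "\<And>a b. b \<in> set (subst_iter z K a)" using primK by blast
  have "m < 2 ^ m" by (rule less_exp)
  also have "(2::nat) ^ m \<le> q ^ m" using q2 by (rule power_mono) simp
  finally have mN: "m \<le> q ^ m" by simp
  define N where "N = m"
  define Q where "Q = q ^ (K + N)"
  have Qpos: "Q > 0" using qpos by (simp add: Q_def)
  show ?thesis
  proof (rule exI[of _ "2 * Q"], intro conjI allI)
    show "0 < 2 * Q" using Qpos by simp
    fix s
    define t where "t = s div Q + 1"
    obtain s' where s': "s' < q ^ K" "x (t * q ^ K + s') = False" using letter_in_block[OF K] by blast
    define u where "u = t * q ^ K + s'"
    have occ: "\<forall>k<m. x (u * q ^ N + k) = x k"
    proof (intro allI impI)
      fix k assume "k < m"
      then have "k < q ^ N" using mN N_def by simp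
      then show "x (u * q ^ N + k) = x k" using blk0 s'(2) u_def by simp
    qed
    have eq: "u * q ^ N = t * Q + s' * q ^ N"
      by (simp add: u_def Q_def power_add algebra_simps)
    have "s < t * Q"
    proof -
      have "s = s div Q * Q + s mod Q" by simp
      moreover have "s mod Q < Q" using Qpos by simp
      ultimately show ?thesis unfolding t_def distrib_right by linarith
    qed
    then have "s \<le> u * q ^ N" using eq by simp
    moreover have "u * q ^ N < s + 2 * Q"
    proof -
      have "s' * q ^ N < q ^ K * q ^ N" using s'(1) qpos by (intro mult_strict_right_mono) auto
      then have "s' * q ^ N < Q" by (simp add: Q_def power_add)
      moreover have "t * Q \<le> s + Q"
      proof -
        have "s div Q * Q \<le> s" by (rule div_times_less_eq_dividend)
        then show ?thesis unfolding t_def by (simp add: distrib_right)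
      qed
      ultimately show ?thesis using eq by simp
    qed
    ultimately show "\<exists>i. s \<le> i \<and> i < s + 2 * Q \<and> (\<forall>k<m. x (i + k) = x k)" using occ by blast
  qed
qed

lemma factor_in_x:
  assumes "is_factor w (subst_iter z k a)"
  shows "\<exists>c. \<forall>j<length w. w ! j = x (c + j)"
proof -
  obtain K where K: "\<And>a b. b \<in> set (subst_iter z K a)" using primK by blast
  obtain s where s: "s < q ^ K" "x (0 * q ^ K + s) = a" using letter_in_block[OF K] by blast
  obtain u1 u2 where v: "subst_iter z k a = u1 @ w @ u2" using assms by (auto simp: is_factor_def)
  have len: "length u1 + length w + length u2 = q ^ k"
    using arg_cong[OF v, of length] length_subst_iter[OF cl] by simp
  show ?thesis
  proof (intro exI[of _ "s * q ^ k + length u1"] allI impI)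
    fix j assume j: "j < length w"
    have r: "length u1 + j < q ^ k" using len j by simp
    have "x (s * q ^ k + length u1 + j) = subst_iter z k a ! (length u1 + j)"
      using blk[OF r, of s] s(2) by (simp add: add.assoc)
    also have "\<dots> = w ! j" using v j by (simp add: nth_append)
    finally show "w ! j = x (s * q ^ k + length u1 + j)" by simp
  qed
qed

lemma no_long_period_run:
  assumes p: "p > 0"
  shows "\<exists>h. \<forall>a. \<not> (\<forall>k<h. x (a + k) = x (a + k + p))"
proof (rule ccontr)
  assume "\<not> ?thesis"
  then have runs: "\<And>h. \<exists>a. \<forall>k<h. x (a + k) = x (a + k + p)" by blast
  have per: "x i = x (i + p)" for i
  proof -
    obtain R where R: "R > 0" "\<And>s. \<exists>b. s \<le> b \<and> b < s + R \<and> (\<forall>k<i + p + 1. x (b + k) = x k)"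
      using UR[of "i + p + 1"] by blast
    obtain a where a: "\<forall>k<R + i + p + 1. x (a + k) = x (a + k + p)" using runs by blast
    obtain b where b: "a \<le> b" "b < a + R" "\<forall>k<i + p + 1. x (b + k) = x k" using R(2) by blast
    have lt: "b - a + i < R + i + p + 1" using b by simp
    have "x (a + (b - a + i)) = x (a + (b - a + i) + p)" using a lt by blast
    then have "x (b + i) = x (b + i + p)" using b by simp
    moreover have "x (b + i) = x i" using b(3) by simp
    moreover have "x (b + (i + p)) = x (i + p)" using b(3) by simp
    ultimately show ?thesis by (simp add: add.assoc)
  qed
  obtain y where y: "y \<in> subshift z" "\<not> shift_periodic y" using aper by (auto simp: aperiodic_subst_def)
  have "y (i + p) = y i" for i
  proof -
    have "map y [i..<i + (p + 1)] \<in> subst_language z" using y(1) unfolding subshift_def by blast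
    then obtain k a where "is_factor (map y [i..<i + (p + 1)]) (subst_iter z k a)"
      by (auto simp: subst_language_def)
    from factor_in_x[OF this] obtain c where c0: "\<forall>j<length (map y [i..<i + (p + 1)]). map y [i..<i + (p + 1)] ! j = x (c + j)" by blast
    have c: "\<forall>j<p + 1. y (i + j) = x (c + j)"
    proof (intro allI impI)
      fix j assume j: "j < p + 1"
      have "map y [i..<i + (p + 1)] ! j = y (i + j)" using j by (simp del: upt_Suc add: nth_map_upt)
      then show "y (i + j) = x (c + j)" using c0 j by (simp del: upt_Suc)
    qed
    have "y i = x c" using spec[OF c, of 0] by simp
    moreover have "y (i + p) = x (c + p)" using spec[OF c, of p] by simp
    ultimately show ?thesis using per by simp
  qed
  then have "shift_periodic y" using p by (auto simp: shift_periodic_def)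
  then show False using y(2) by simp
qed

lemma bounded_runs: "\<exists>h. \<forall>a p. 0 < p \<longrightarrow> p < g \<longrightarrow> \<not> (\<forall>k<h. x (a + k) = x (a + k + p))"
proof (induction g)
  case 0 then show ?case by simp
next
  case (Suc g)
  then obtain h where h: "\<forall>a p. 0 < p \<longrightarrow> p < g \<longrightarrow> \<not> (\<forall>k<h. x (a + k) = x (a + k + p))" by blast
  show ?case
  proof (cases "g = 0")
    case True then show ?thesis by auto
  next
    case False
    then obtain h' where h': "\<forall>a. \<not> (\<forall>k<h'. x (a + k) = x (a + k + g))" using no_long_period_run by blast
    show ?thesis
    proof (intro exI[of _ "max h h'"] allI impI)
      fix a p assume p: "0 < p" "p < Suc g"
      show "\<not> (\<forall>k<max h h'. x (a + k) = x (a + k + p))"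
      proof (cases "p < g")
        case True
        show ?thesis
        proof
          assume "\<forall>k<max h h'. x (a + k) = x (a + k + p)"
          then have "\<forall>k<h. x (a + k) = x (a + k + p)" by simp
          with h p True show False by blast
        qed
      next
        case False then have "p = g" using p by simp
        show ?thesis
        proof
          assume "\<forall>k<max h h'. x (a + k) = x (a + k + p)"
          then have "\<forall>k<h'. x (a + k) = x (a + k + p)" by simp
          with h' \<open>p = g\<close> show False by blast
        qed
      qed
    qed
  qed
qed

end


lemma sum_split_add: "(\<Sum>r<L1 + L2. f r) = (\<Sum>r<L1. f r) + (\<Sum>r<L2. f (L1 + r :: nat))"
  by (induction L2) (simp_all add: add.assoc)

definition C1 :: "(nat \<Rightarrow> bool) \<Rightarrow> nat \<Rightarrow> nat \<Rightarrow> nat" where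
  "C1 P a L = (\<Sum>r<L. of_bool (P (a + r)))"

definition C0 :: "(nat \<Rightarrow> bool) \<Rightarrow> nat \<Rightarrow> nat \<Rightarrow> nat \<Rightarrow> nat" where
  "C0 P m a L = (\<Sum>r<L. of_bool (r + m \<le> L \<and> P (a + r)))"

lemma C1_add: "C1 P a (L1 + L2) = C1 P a L1 + C1 P (a + L1) L2"
  unfolding C1_def by (simp add: sum_split_add add.assoc)

lemma C0_add: "C0 P m a L1 + C0 P m (a + L1) L2 \<le> C0 P m a (L1 + L2)"
proof -
  have "C0 P m a (L1 + L2) = (\<Sum>r<L1. of_bool (r + m \<le> L1 + L2 \<and> P (a + r)))
      + (\<Sum>r<L2. of_bool (L1 + r + m \<le> L1 + L2 \<and> P (a + (L1 + r))))"
    unfolding C0_def by (rule sum_split_add)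
  moreover have "C0 P m a L1 \<le> (\<Sum>r<L1. of_bool (r + m \<le> L1 + L2 \<and> P (a + r)))"
    unfolding C0_def by (intro sum_mono) auto
  moreover have "C0 P m (a + L1) L2 = (\<Sum>r<L2. of_bool (L1 + r + m \<le> L1 + L2 \<and> P (a + (L1 + r))))"
    unfolding C0_def by (intro sum.cong) (auto simp: add.assoc)
  ultimately show ?thesis by simp
qed

lemma C0_le_C1: "C0 P m a L \<le> C1 P a L"
  unfolding C0_def C1_def by (intro sum_mono) auto

lemma C1_le_C0: "C1 P a L \<le> C0 P m a L + m"
proof (cases "m \<le> L")
  case True
  have "C1 P a L = C1 P a ((L - m) + m)" using True by simp
  also have "\<dots> = C1 P a (L - m) + C1 P (a + (L - m)) m" by (rule C1_add)
  also have "C1 P (a + (L - m)) m \<le> m" unfolding C1_def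
    by (rule order_trans[OF sum_mono[of _ _ "\<lambda>_. 1"]]) auto
  also have "C1 P a (L - m) \<le> C0 P m a L"
  proof -
    have "C0 P m a L = C0 P m a ((L - m) + m)" using True by simp
    also have "\<dots> = (\<Sum>r<L - m. of_bool (r + m \<le> L - m + m \<and> P (a + r))) +
       (\<Sum>r<m. of_bool (L - m + r + m \<le> L - m + m \<and> P (a + (L - m + r))))"
      unfolding C0_def by (rule sum_split_add)
    finally have "C0 P m a L \<ge> (\<Sum>r<L - m. of_bool (r + m \<le> L - m + m \<and> P (a + r)))" by simp
    moreover have "(\<Sum>r<L - m. of_bool (r + m \<le> L - m + m \<and> P (a + r))) = C1 P a (L - m)"
      unfolding C1_def by (intro sum.cong) auto
    ultimately show ?thesis by simp
  qed
  finally show ?thesis by simp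
next
  case False
  have "C1 P a L \<le> L" unfolding C1_def
    by (rule order_trans[OF sum_mono[of _ _ "\<lambda>_. 1"]]) auto
  then show ?thesis using False by simp
qed

lemma blocks_lower: "(\<Sum>s<P'. C0 P m (a + s * Q) Q) \<le> C0 P m a (P' * Q)"
proof (induction P')
  case 0 then show ?case by simp
next
  case (Suc P')
  have "(\<Sum>s<Suc P'. C0 P m (a + s * Q) Q) = (\<Sum>s<P'. C0 P m (a + s * Q) Q) + C0 P m (a + P' * Q) Q" by simp
  also have "\<dots> \<le> C0 P m a (P' * Q) + C0 P m (a + P' * Q) Q" using Suc by simp
  also have "\<dots> \<le> C0 P m a (P' * Q + Q)" by (rule C0_add)
  finally show ?case by (simp add: add.commute)
qed

lemma blocks_upper: "C1 P a (P' * Q) \<le> (\<Sum>s<P'. C0 P m (a + s * Q) Q) + P' * m"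
proof (induction P')
  case 0 then show ?case by (simp add: C1_def)
next
  case (Suc P')
  have "C1 P a (Suc P' * Q) = C1 P a (P' * Q + Q)" by (simp add: add.commute)
  also have "\<dots> = C1 P a (P' * Q) + C1 P (a + P' * Q) Q" by (rule C1_add)
  also have "\<dots> \<le> ((\<Sum>s<P'. C0 P m (a + s * Q) Q) + P' * m) + (C0 P m (a + P' * Q) Q + m)"
    using Suc C1_le_C0[of P "a + P' * Q" Q m] by linarith
  finally show ?case by simp
qed

definition occ :: "(nat \<Rightarrow> bool) \<Rightarrow> bool list \<Rightarrow> nat \<Rightarrow> bool" where
  "occ x w i \<longleftrightarrow> (\<forall>k<length w. x (i + k) = w ! k)"

definition cntw :: "(nat \<Rightarrow> bool) \<Rightarrow> bool list \<Rightarrow> nat \<Rightarrow> nat" where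
  "cntw x w n = C1 (occ x w) 0 n"

lemma C1_mono: "L1 \<le> L2 \<Longrightarrow> C1 P a L1 \<le> C1 P a L2"
  using C1_add[of P a L1 "L2 - L1"] by simp

lemma C1_le: "C1 P a L \<le> L"
  unfolding C1_def by (rule order_trans[OF sum_mono[of _ _ "\<lambda>_. 1"]]) auto

context sfp
begin

definition G :: "bool list \<Rightarrow> nat \<Rightarrow> bool \<Rightarrow> nat" where
  "G w N b = (\<Sum>r<q ^ N. of_bool (r + length w \<le> q ^ N \<and> (\<forall>j<length w. subst_iter z N b ! (r + j) = w ! j)))"

lemma C0_block: "C0 (occ x w) (length w) (t * q ^ N) (q ^ N) = G w N (x t)"
  unfolding C0_def G_def
proof (intro sum.cong refl)
  fix r assume "r \<in> {..<q ^ N}"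
  show "of_bool (r + length w \<le> q ^ N \<and> occ x w (t * q ^ N + r)) =
        of_bool (r + length w \<le> q ^ N \<and> (\<forall>j<length w. subst_iter z N (x t) ! (r + j) = w ! j))"
  proof (cases "r + length w \<le> q ^ N")
    case True
    have eqs: "\<forall>j<length w. x (t * q ^ N + r + j) = subst_iter z N (x t) ! (r + j)"
    proof (intro allI impI)
      fix j assume "j < length w"
      then have "r + j < q ^ N" using True by simp
      from blk[OF this, of t] show "x (t * q ^ N + r + j) = subst_iter z N (x t) ! (r + j)" by (simp add: add.assoc)
    qed
    have "occ x w (t * q ^ N + r) \<longleftrightarrow> (\<forall>j<length w. subst_iter z N (x t) ! (r + j) = w ! j)"
      unfolding occ_def using eqs by auto
    then show ?thesis by simp
  qed simp
qed

lemma G_le: "G w N b \<le> q ^ N"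
  unfolding G_def by (rule order_trans[OF sum_mono[of _ _ "\<lambda>_. 1"]]) auto

lemma letters_exist: "\<exists>t. x t = b"
proof -
  obtain K where K: "\<And>a b. b \<in> set (subst_iter z K a)" using primK by blast
  show ?thesis using letter_in_block[OF K, of 0 b] by blast
qed

lemma G_rec:
  assumes "x t = b"
  shows "(\<Sum>s<q ^ K. G w N (x (t * q ^ K + s))) \<le> G w (N + K) b"
    and "G w (N + K) b \<le> (\<Sum>s<q ^ K. G w N (x (t * q ^ K + s))) + q ^ K * length w"
proof -
  let ?P = "occ x w" and ?m = "length w"
  have big: "G w (N + K) b = C0 ?P ?m (t * q ^ (N + K)) (q ^ K * q ^ N)"
    using C0_block[of w t "N + K"] assms by (simp add: power_add mult.commute)
  have sm: "C0 ?P ?m (t * q ^ (N + K) + s * q ^ N) (q ^ N) = G w N (x (t * q ^ K + s))" for s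
  proof -
    have "t * q ^ (N + K) + s * q ^ N = (t * q ^ K + s) * q ^ N" by (simp add: power_add algebra_simps)
    then show ?thesis using C0_block[of w "t * q ^ K + s" N] by simp
  qed
  show "(\<Sum>s<q ^ K. G w N (x (t * q ^ K + s))) \<le> G w (N + K) b"
    using blocks_lower[of ?P ?m "t * q ^ (N + K)" "q ^ N" "q ^ K"] big sm by simp
  show "G w (N + K) b \<le> (\<Sum>s<q ^ K. G w N (x (t * q ^ K + s))) + q ^ K * length w"
    using blocks_upper[of ?P "t * q ^ (N + K)" "q ^ K" "q ^ N" ?m] big sm C0_le_C1[of ?P ?m "t * q ^ (N + K)" "q ^ K * q ^ N"]
    by simp
qed

end


context sfp
begin

definition gg :: "bool list \<Rightarrow> nat \<Rightarrow> bool \<Rightarrow> real" where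
  "gg w N b = real (G w N b) / real q ^ N"

lemma gg_bounds: "0 \<le> gg w N b" "gg w N b \<le> 1"
  using G_le[of w N b] qpos by (auto simp: gg_def divide_le_eq_1)

lemma sum_two_letters:
  "(\<Sum>s<Q. real (G w N (x (f s)))) = (\<Sum>s<Q. of_bool (\<not> x (f s)) :: real) * real (G w N False) + (real Q - (\<Sum>s<Q. of_bool (\<not> x (f s)))) * real (G w N True)"
proof -
  have "(\<Sum>s<Q. real (G w N (x (f s)))) = (\<Sum>s<Q. of_bool (\<not> x (f s)) * real (G w N False) + (1 - of_bool (\<not> x (f s))) * real (G w N True))"
    by (intro sum.cong) auto
  also have "\<dots> = (\<Sum>s<Q. of_bool (\<not> x (f s)) :: real) * real (G w N False) + (real Q - (\<Sum>s<Q. of_bool (\<not> x (f s)))) * real (G w N True)"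
    by (simp add: sum.distrib sum_distrib_right sum_subtractf algebra_simps)
  finally show ?thesis .
qed

lemma gg_avg:
  "\<exists>\<alpha> e. 0 \<le> \<alpha> \<and> \<alpha> \<le> 1 \<and> 0 \<le> e \<and> e \<le> real (length w) / real q ^ N \<and>
     gg w (N + K) b = \<alpha> * gg w N False + (1 - \<alpha>) * gg w N True + e \<and>
     ((\<forall>a c. c \<in> set (subst_iter z K a)) \<longrightarrow> 1 / real q ^ K \<le> \<alpha> \<and> \<alpha> \<le> 1 - 1 / real q ^ K)"
proof -
  obtain t where t: "x t = b" using letters_exist by blast
  define Q where "Q = q ^ K"
  define cF :: real where "cF = (\<Sum>s<Q. of_bool (\<not> x (t * q ^ K + s)))"
  define S where "S = (\<Sum>s<q ^ K. G w N (x (t * q ^ K + s)))"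
  have S_eq: "real S = cF * real (G w N False) + (real Q - cF) * real (G w N True)"
    unfolding S_def cF_def Q_def of_nat_sum by (rule sum_two_letters[where f="\<lambda>s. t * q ^ K + s"])
  have r1: "S \<le> G w (N + K) b" and r2: "G w (N + K) b \<le> S + q ^ K * length w"
    using G_rec[OF t, of w N K] unfolding S_def by auto
  define e where "e = (real (G w (N + K) b) - real S) / real q ^ (N + K)"
  have Qpos: "real Q > 0" using qpos by (simp add: Q_def)
  have cF0: "0 \<le> cF" by (simp add: cF_def sum_nonneg)
  have cFQ: "cF \<le> real Q"
  proof -
    have "cF \<le> (\<Sum>s<Q. 1)" unfolding cF_def by (intro sum_mono) auto
    then show ?thesis by simp
  qed
  define \<alpha> where "\<alpha> = cF / real Q"
  have qN: "real q ^ N > 0" using qpos by simp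
  have main: "gg w (N + K) b = \<alpha> * gg w N False + (1 - \<alpha>) * gg w N True + e"
  proof -
    have "gg w (N + K) b = (real S + (real (G w (N + K) b) - real S)) / real q ^ (N + K)"
      by (simp add: gg_def)
    also have "\<dots> = real S / (real Q * real q ^ N) + e"
      using qN qpos by (simp add: e_def Q_def power_add field_simps)
    also have "real S / (real Q * real q ^ N) = \<alpha> * gg w N False + (1 - \<alpha>) * gg w N True"
      using Qpos qN by (simp add: S_eq \<alpha>_def gg_def field_simps)
    finally show ?thesis .
  qed
  have e0: "0 \<le> e" using r1 by (simp add: e_def)
  have e1: "e \<le> real (length w) / real q ^ N"
  proof -
    have "real (G w (N + K) b) - real S \<le> real q ^ K * real (length w)" 
    proof -
      have "real (G w (N + K) b) \<le> real (S + q ^ K * length w)" using r2 by (simp only: of_nat_le_iff)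
      then show ?thesis by simp
    qed
    then have "e \<le> real q ^ K * real (length w) / real q ^ (N + K)"
      unfolding e_def using qN by (intro divide_right_mono) auto
    also have "\<dots> = real (length w) / real q ^ N" using qpos by (simp add: power_add field_simps)
    finally show ?thesis .
  qed
  have prim_part: "1 / real q ^ K \<le> \<alpha> \<and> \<alpha> \<le> 1 - 1 / real q ^ K" if K: "\<forall>a c. c \<in> set (subst_iter z K a)"
  proof -
    obtain s0 where s0: "s0 < q ^ K" "x (t * q ^ K + s0) = False" using letter_in_block[of K t False] K by blast
    obtain s1 where s1: "s1 < q ^ K" "x (t * q ^ K + s1) = True" using letter_in_block[of K t True] K by blast
    have "1 \<le> cF"
    proof -
      have "of_bool (\<not> x (t * q ^ K + s0)) \<le> cF" unfolding cF_def
        by (rule member_le_sum[of s0 "{..<Q}" "\<lambda>s. of_bool (\<not> x (t * q ^ K + s))"]) (use s0 in \<open>auto simp: Q_def\<close>)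
      then show ?thesis using s0 by simp
    qed
    moreover have "cF \<le> real Q - 1"
    proof -
      have "cF = (\<Sum>s\<in>{..<Q} - {s1}. of_bool (\<not> x (t * q ^ K + s)))"
        unfolding cF_def using s1 by (intro sum.mono_neutral_right) (auto simp: Q_def)
      also have "\<dots> \<le> (\<Sum>s\<in>{..<Q} - {s1}. 1)" by (intro sum_mono) auto
      also have "\<dots> = real Q - 1" using s1 by (simp add: Q_def)
      finally show ?thesis .
    qed
    ultimately show ?thesis using Qpos by (simp add: \<alpha>_def Q_def field_simps)
  qed
  show ?thesis
    by (rule exI[of _ \<alpha>], rule exI[of _ e])
       (use main e0 e1 prim_part cF0 cFQ Qpos in \<open>auto simp: \<alpha>_def field_simps\<close>)
qed

end


lemma conv_two:
  fixes u v E :: "nat \<Rightarrow> real" and c :: real and K :: nat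
  assumes b: "\<And>N. 0 \<le> u N" "\<And>N. u N \<le> 1" "\<And>N. 0 \<le> v N" "\<And>N. v N \<le> 1"
    and mn: "\<And>N. min (u N) (v N) \<le> min (u (Suc N)) (v (Suc N))"
    and mx: "\<And>N. max (u (Suc N)) (v (Suc N)) \<le> max (u N) (v N) + E N"
    and E0: "\<And>N. 0 \<le> E N" and E2: "\<And>N. 2 * E (Suc N) \<le> E N" and Elim: "E \<longlonglongrightarrow> 0"
    and c: "0 \<le> c" "c < 1"
    and contr: "\<And>N. \<bar>u (N + K) - v (N + K)\<bar> \<le> c * \<bar>u N - v N\<bar> + E N"
  shows "\<exists>A. u \<longlonglongrightarrow> A \<and> v \<longlonglongrightarrow> A"
proof -
  define m where "m N = min (u N) (v N)" for N
  define M where "M N = max (u N) (v N) + 2 * E N" for N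
  have "incseq m" by (rule incseq_SucI) (use mn in \<open>simp add: m_def\<close>)
  moreover have "\<forall>i. m i \<le> 1" using b by (simp add: m_def min_le_iff_disj)
  ultimately obtain A where A: "m \<longlonglongrightarrow> A" by (rule incseq_convergent)
  have "decseq M"
  proof (rule decseq_SucI)
    fix N show "M (Suc N) \<le> M N" using mx[of N] E2[of N] E0[of N] unfolding M_def by linarith
  qed
  moreover have "\<forall>i. 0 \<le> M i" using b E0 by (simp add: M_def le_max_iff_disj add_nonneg_nonneg)
  ultimately obtain B where B: "M \<longlonglongrightarrow> B" by (rule decseq_convergent)
  have mxB: "(\<lambda>N. max (u N) (v N)) \<longlonglongrightarrow> B"
  proof -
    have "(\<lambda>N. M N - 2 * E N) \<longlonglongrightarrow> B - 2 * 0" by (intro tendsto_intros B Elim)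
    then show ?thesis by (simp add: M_def)
  qed
  have d: "(\<lambda>N. \<bar>u N - v N\<bar>) \<longlonglongrightarrow> B - A"
  proof -
    have "(\<lambda>N. max (u N) (v N) - m N) \<longlonglongrightarrow> B - A" by (intro tendsto_intros mxB A)
    moreover have "max (u N) (v N) - m N = \<bar>u N - v N\<bar>" for N by (simp add: m_def abs_if max_def min_def)
    ultimately show ?thesis by simp
  qed
  have dK: "(\<lambda>N. \<bar>u (N + K) - v (N + K)\<bar>) \<longlonglongrightarrow> B - A"
    using LIMSEQ_ignore_initial_segment[OF d, of K] by simp
  have rhs: "(\<lambda>N. c * \<bar>u N - v N\<bar> + E N) \<longlonglongrightarrow> c * (B - A) + 0"
    by (intro tendsto_intros d Elim)
  have "B - A \<le> c * (B - A) + 0" by (rule LIMSEQ_le[OF dK rhs]) (use contr in auto)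
  then have "(1 - c) * (B - A) \<le> 0" by (simp add: algebra_simps)
  then have BA: "B - A \<le> 0" using c by (simp add: mult_le_0_iff)
  have "A \<le> B"
  proof (rule LIMSEQ_le[OF A mxB])
    show "\<exists>N. \<forall>n\<ge>N. m n \<le> max (u n) (v n)" by (auto simp: m_def)
  qed
  then have AB: "A = B" using BA by simp
  have "u \<longlonglongrightarrow> A"
    by (rule tendsto_sandwich[OF _ _ A mxB[unfolded AB[symmetric]]]) (auto simp: m_def)
  moreover have "v \<longlonglongrightarrow> A"
    by (rule tendsto_sandwich[OF _ _ A mxB[unfolded AB[symmetric]]]) (auto simp: m_def)
  ultimately show ?thesis by blast
qed


context sfp
begin

lemma gg_conv: "\<exists>A. (\<lambda>N. gg w N False) \<longlonglongrightarrow> A \<and> (\<lambda>N. gg w N True) \<longlonglongrightarrow> A"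
proof -
  obtain K where K1: "K \<ge> 1" and K: "\<forall>a b. b \<in> set (subst_iter z K a)" using primK by blast
  define E where "E N = real (length w) / real q ^ N" for N
  define \<delta> where "\<delta> = 1 / real q ^ K"
  have qge: "real q \<ge> 2" using q2 by simp
  have qK: "real q ^ K \<ge> 2"
  proof -
    have "real q ^ 1 \<le> real q ^ K" using qge K1 by (intro power_increasing) auto
    then show ?thesis using qge by (simp only: power_one_right)
  qed
  have qKp: "real q ^ K > 0" using qK by linarith
  have \<delta>: "0 < \<delta>" "\<delta> \<le> 1/2"
    unfolding \<delta>_def using qKp apply simp
    using qK qKp by (simp add: divide_le_eq)
  let ?u = "\<lambda>N. gg w N False" and ?v = "\<lambda>N. gg w N True"
  show ?thesis
  proof (rule conv_two[where E = E and c = "1 - 2 * \<delta>" and K = K])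
    show "\<And>N. 0 \<le> ?u N" "\<And>N. ?u N \<le> 1" "\<And>N. 0 \<le> ?v N" "\<And>N. ?v N \<le> 1" using gg_bounds by auto
    show "\<And>N. 0 \<le> E N" using qpos by (simp add: E_def)
    show "2 * E (Suc N) \<le> E N" for N
    proof -
      have "2 * E (Suc N) = (2 / real q) * E N" using qpos by (simp add: E_def field_simps)
      also have "\<dots> \<le> 1 * E N"
      proof (rule mult_right_mono)
        show "2 / real q \<le> 1" using qge by simp
        show "0 \<le> E N" by (simp add: E_def)
      qed
      finally show ?thesis by simp
    qed
    show "E \<longlonglongrightarrow> 0"
    proof -
      have "(\<lambda>N. real (length w) * (1 / real q) ^ N) \<longlonglongrightarrow> real (length w) * 0"
        using qge by (intro tendsto_intros LIMSEQ_power_zero) auto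
      moreover have "E = (\<lambda>N. real (length w) * (1 / real q) ^ N)"
        by (rule ext) (simp add: E_def power_one_over)
      ultimately show ?thesis by simp
    qed
    show "0 \<le> 1 - 2 * \<delta>" "1 - 2 * \<delta> < 1" using \<delta> by auto
  next
    fix N
    have step: "min (?u N) (?v N) \<le> gg w (Suc N) b \<and> gg w (Suc N) b \<le> max (?u N) (?v N) + E N" for b
    proof -
      obtain \<alpha> e where ae: "0 \<le> \<alpha>" "\<alpha> \<le> 1" "0 \<le> e" "e \<le> E N"
        "gg w (N + 1) b = \<alpha> * ?u N + (1 - \<alpha>) * ?v N + e"
        using gg_avg[of w N 1 b] unfolding E_def by blast
      have lo: "min (?u N) (?v N) \<le> \<alpha> * ?u N + (1 - \<alpha>) * ?v N"
      proof -
        have "\<alpha> * min (?u N) (?v N) \<le> \<alpha> * ?u N" using ae by (intro mult_left_mono) auto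
        moreover have "(1 - \<alpha>) * min (?u N) (?v N) \<le> (1 - \<alpha>) * ?v N" using ae by (intro mult_left_mono) auto
        ultimately show ?thesis by (simp add: algebra_simps)
      qed
      have hi: "\<alpha> * ?u N + (1 - \<alpha>) * ?v N \<le> max (?u N) (?v N)"
      proof -
        have "\<alpha> * ?u N \<le> \<alpha> * max (?u N) (?v N)" using ae by (intro mult_left_mono) auto
        moreover have "(1 - \<alpha>) * ?v N \<le> (1 - \<alpha>) * max (?u N) (?v N)" using ae by (intro mult_left_mono) auto
        ultimately show ?thesis by (simp add: algebra_simps)
      qed
      show ?thesis using lo hi ae by simp
    qed
    show "min (?u N) (?v N) \<le> min (?u (Suc N)) (?v (Suc N))" using step[of False] step[of True] by simp
    show "max (?u (Suc N)) (?v (Suc N)) \<le> max (?u N) (?v N) + E N" using step[of False] step[of True] by simp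
    obtain \<alpha>1 e1 where a1: "0 \<le> e1" "e1 \<le> E N" "\<delta> \<le> \<alpha>1" "\<alpha>1 \<le> 1 - \<delta>"
        "gg w (N + K) False = \<alpha>1 * ?u N + (1 - \<alpha>1) * ?v N + e1"
      using gg_avg[of w N K False] K unfolding E_def \<delta>_def by blast
    obtain \<alpha>2 e2 where a2: "0 \<le> e2" "e2 \<le> E N" "\<delta> \<le> \<alpha>2" "\<alpha>2 \<le> 1 - \<delta>"
        "gg w (N + K) True = \<alpha>2 * ?u N + (1 - \<alpha>2) * ?v N + e2"
      using gg_avg[of w N K True] K unfolding E_def \<delta>_def by blast
    have "?u (N + K) - ?v (N + K) = (\<alpha>1 - \<alpha>2) * (?u N - ?v N) + (e1 - e2)"
      using a1(5) a2(5) by (simp add: algebra_simps)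
    moreover have "\<bar>(\<alpha>1 - \<alpha>2) * (?u N - ?v N)\<bar> \<le> (1 - 2 * \<delta>) * \<bar>?u N - ?v N\<bar>"
    proof -
      have "\<bar>\<alpha>1 - \<alpha>2\<bar> \<le> 1 - 2 * \<delta>" using a1 a2 by (simp add: abs_le_iff)
      then show ?thesis unfolding abs_mult by (intro mult_right_mono) auto
    qed
    moreover have "\<bar>e1 - e2\<bar> \<le> E N" using a1 a2 by (simp add: abs_le_iff)
    ultimately show "\<bar>?u (N + K) - ?v (N + K)\<bar> \<le> (1 - 2 * \<delta>) * \<bar>?u N - ?v N\<bar> + E N"
      using abs_triangle_ineq[of "(\<alpha>1 - \<alpha>2) * (?u N - ?v N)" "e1 - e2"] by linarith
  qed
qed

end


context sfp
begin

lemma cnt_bounds: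
  shows "(\<Sum>t<n div q ^ N. G w N (x t)) \<le> cntw x w n"
    and "cntw x w n \<le> (\<Sum>t<n div q ^ N. G w N (x t)) + (n div q ^ N) * length w + q ^ N"
proof -
  let ?P = "occ x w" and ?m = "length w" and ?Q = "q ^ N" and ?T = "n div q ^ N"
  have Qp: "?Q > 0" using qpos by simp
  have TQ: "?T * ?Q \<le> n" by (simp add: div_times_less_eq_dividend)
  have sumG: "(\<Sum>s<?T. C0 ?P ?m (0 + s * ?Q) ?Q) = (\<Sum>t<?T. G w N (x t))"
    using C0_block by simp
  have "(\<Sum>t<?T. G w N (x t)) \<le> C0 ?P ?m 0 (?T * ?Q)"
    using blocks_lower[of ?P ?m 0 ?Q ?T] sumG by simp
  also have "\<dots> \<le> C1 ?P 0 (?T * ?Q)" by (rule C0_le_C1)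
  also have "\<dots> \<le> C1 ?P 0 n" using TQ by (rule C1_mono)
  finally show "(\<Sum>t<n div q ^ N. G w N (x t)) \<le> cntw x w n" by (simp add: cntw_def)
  have "C1 ?P 0 n = C1 ?P 0 (?T * ?Q + (n - ?T * ?Q))" using TQ by simp
  also have "\<dots> = C1 ?P 0 (?T * ?Q) + C1 ?P (0 + ?T * ?Q) (n - ?T * ?Q)" by (rule C1_add)
  also have "C1 ?P (0 + ?T * ?Q) (n - ?T * ?Q) \<le> n - ?T * ?Q" by (rule C1_le)
  also have "n - ?T * ?Q \<le> ?Q"
  proof -
    have "n - ?T * ?Q = n mod ?Q" by (simp add: minus_div_mult_eq_mod)
    then show ?thesis using Qp by simp
  qed
  also have "C1 ?P 0 (?T * ?Q) \<le> (\<Sum>s<?T. C0 ?P ?m (0 + s * ?Q) ?Q) + ?T * ?m"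
    by (rule blocks_upper)
  finally show "cntw x w n \<le> (\<Sum>t<n div q ^ N. G w N (x t)) + (n div q ^ N) * length w + q ^ N"
    using sumG by (simp add: cntw_def)
qed

lemma freq: "\<exists>A. (\<lambda>n. real (cntw x w n) / real n) \<longlonglongrightarrow> A"
proof -
  obtain A where uA: "(\<lambda>N. gg w N False) \<longlonglongrightarrow> A" and vA: "(\<lambda>N. gg w N True) \<longlonglongrightarrow> A"
    using gg_conv by blast
  have qge: "real q \<ge> 2" using q2 by simp
  have Elim: "(\<lambda>N. real (length w) / real q ^ N) \<longlonglongrightarrow> 0"
  proof -
    have "(\<lambda>N. real (length w) * (1 / real q) ^ N) \<longlonglongrightarrow> real (length w) * 0"
      using qge by (intro tendsto_intros LIMSEQ_power_zero) auto
    moreover have "(\<lambda>N. real (length w) / real q ^ N) = (\<lambda>N. real (length w) * (1 / real q) ^ N)"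
      by (rule ext) (simp add: power_one_over)
    ultimately show ?thesis by simp
  qed
  show ?thesis
  proof (rule exI[of _ A], rule LIMSEQ_I)
    fix \<epsilon> :: real assume \<epsilon>: "\<epsilon> > 0"
    have ev: "eventually (\<lambda>N. \<bar>gg w N False - A\<bar> < \<epsilon>/3 \<and> \<bar>gg w N True - A\<bar> < \<epsilon>/3 \<and> real (length w) / real q ^ N < \<epsilon>/3) sequentially"
    proof (intro eventually_conj)
      have e3: "\<epsilon>/3 > 0" using \<epsilon> by simp
      show "eventually (\<lambda>N. \<bar>gg w N False - A\<bar> < \<epsilon>/3) sequentially"
        using uA[unfolded tendsto_iff, rule_format, OF e3] unfolding dist_real_def .
      show "eventually (\<lambda>N. \<bar>gg w N True - A\<bar> < \<epsilon>/3) sequentially"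
        using vA[unfolded tendsto_iff, rule_format, OF e3] unfolding dist_real_def .
      show "eventually (\<lambda>N. real (length w) / real q ^ N < \<epsilon>/3) sequentially"
        using Elim[unfolded tendsto_iff, rule_format, OF e3] unfolding dist_real_def by simp
    qed
    then obtain N where N: "\<bar>gg w N False - A\<bar> < \<epsilon>/3" "\<bar>gg w N True - A\<bar> < \<epsilon>/3"
      "real (length w) / real q ^ N < \<epsilon>/3"
      by (auto simp: eventually_sequentially)
    define Q where "Q = q ^ N"
    have Qp: "real Q > 0" using qpos by (simp add: Q_def)
    have gA: "\<bar>gg w N b - A\<bar> < \<epsilon>/3" for b using N by (cases b) auto
    obtain n0 :: nat where n0: "real n0 > 3 * real Q / \<epsilon>" using reals_Archimedean2 by blast
    show "\<exists>no. \<forall>n\<ge>no. norm (real (cntw x w n) / real n - A) < \<epsilon>"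
    proof (rule exI[of _ "n0 + 1"], intro allI impI)
      fix n assume nn: "n \<ge> n0 + 1"
      have npos: "real n > 0" using nn by simp
      have Qn: "real Q / real n < \<epsilon>/3"
      proof -
        have "real Q < \<epsilon>/3 * real n0" using n0 \<epsilon> by (simp add: field_simps)
        also have "\<dots> \<le> \<epsilon>/3 * real n" using nn \<epsilon> by (intro mult_left_mono) auto
        finally show ?thesis using npos by (simp add: field_simps)
      qed
      define T where "T = n div Q"
      have TQ: "real T * real Q \<le> real n"
      proof -
        have "T * Q \<le> n" by (simp add: T_def div_times_less_eq_dividend)
        then show ?thesis by (metis of_nat_le_iff of_nat_mult)
      qed
      have TQ2: "real n - real Q \<le> real T * real Q"
      proof -
        have "n < T * Q + Q" using qpos
          by (simp add: T_def Q_def) (metis add.commute div_mult_mod_eq mod_less_divisor nat_add_left_cancel_less zero_less_power)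
        then have "real n < real T * real Q + real Q" by (metis of_nat_add of_nat_less_iff of_nat_mult)
        then show ?thesis by simp
      qed
      have Gsum: "real (\<Sum>t<T. G w N (x t)) = real Q * (\<Sum>t<T. gg w N (x t))"
        using Qp by (simp add: gg_def Q_def sum_distrib_left)
      have sumlo: "real T * (A - \<epsilon>/3) \<le> (\<Sum>t<T. gg w N (x t))"
      proof -
        have "(\<Sum>t<T. A - \<epsilon>/3) \<le> (\<Sum>t<T. gg w N (x t))" by (intro sum_mono) (use gA in \<open>smt (verit)\<close>)
        then show ?thesis by simp
      qed
      have sumhi: "(\<Sum>t<T. gg w N (x t)) \<le> real T * (A + \<epsilon>/3)"
      proof -
        have "(\<Sum>t<T. gg w N (x t)) \<le> (\<Sum>t<T. A + \<epsilon>/3)" by (intro sum_mono) (use gA in \<open>smt (verit)\<close>)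
        then show ?thesis by simp
      qed
      have c1: "real (\<Sum>t<T. G w N (x t)) \<le> real (cntw x w n)"
        using cnt_bounds(1)[where n=n and N=N and w=w] unfolding T_def Q_def of_nat_le_iff .
      have c2: "real (cntw x w n) \<le> real (\<Sum>t<T. G w N (x t)) + real T * real (length w) + real Q"
      proof -
        have "cntw x w n \<le> (\<Sum>t<T. G w N (x t)) + T * length w + Q"
          using cnt_bounds(2)[where n=n and N=N and w=w] by (simp add: T_def Q_def)
        then show ?thesis by (metis of_nat_add of_nat_le_iff of_nat_mult)
      qed
      have Agt: "0 \<le> A"
        using uA by (rule LIMSEQ_le_const) (auto intro: gg_bounds)
      have A1: "A \<le> 1"
        using uA by (rule LIMSEQ_le_const2) (auto intro: gg_bounds)
      have lower: "A - \<epsilon> < real (cntw x w n) / real n"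
      proof (cases "A - \<epsilon>/3 < 0")
        case True
        have "0 \<le> real (cntw x w n) / real n" by simp
        then show ?thesis using True \<epsilon> by linarith
      next
        case False
        have "real T * real Q * (A - \<epsilon>/3) \<le> real (cntw x w n)"
        proof -
          have "real T * real Q * (A - \<epsilon>/3) = real Q * (real T * (A - \<epsilon>/3))" by simp
          also have "\<dots> \<le> real Q * (\<Sum>t<T. gg w N (x t))" using sumlo Qp by (intro mult_left_mono) auto
          finally show ?thesis using c1 Gsum by linarith
        qed
        moreover have "(real n - real Q) * (A - \<epsilon>/3) \<le> real T * real Q * (A - \<epsilon>/3)"
          using TQ2 False by (intro mult_right_mono) auto
        ultimately have X: "(real n - real Q) * (A - \<epsilon>/3) \<le> real (cntw x w n)" by linarith
        have "(real n - real Q) * (A - \<epsilon>/3) / real n \<le> real (cntw x w n) / real n"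
          using X npos by (intro divide_right_mono) auto
        moreover have "(real n - real Q) * (A - \<epsilon>/3) / real n = (A - \<epsilon>/3) - real Q / real n * (A - \<epsilon>/3)"
          using npos by (simp add: field_simps)
        moreover have "real Q / real n * (A - \<epsilon>/3) \<le> real Q / real n"
        proof -
          have h1: "A - \<epsilon>/3 \<le> 1" using A1 \<epsilon> by simp
          have h2: "0 \<le> real Q / real n" by simp
          show ?thesis using mult_left_mono[OF h1 h2] by simp
        qed
        moreover have gen: "L \<le> R \<Longrightarrow> L = (A - \<epsilon>/3) - Y \<Longrightarrow> Y \<le> Z \<Longrightarrow> Z < \<epsilon>/3 \<Longrightarrow> A - \<epsilon> < R" for L R Y Z :: real
          using \<epsilon> by linarith
        ultimately show ?thesis using Qn by blast
      qed
      have upper: "real (cntw x w n) / real n < A + \<epsilon>"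
      proof -
        have "real (cntw x w n) \<le> real T * real Q * (A + \<epsilon>/3) + real T * real (length w) + real Q"
        proof -
          have "real Q * (\<Sum>t<T. gg w N (x t)) \<le> real Q * (real T * (A + \<epsilon>/3))" using sumhi Qp by (intro mult_left_mono) auto
          then show ?thesis using c2 Gsum by (simp add: algebra_simps)
        qed
        also have "\<dots> \<le> real n * (A + \<epsilon>/3) + real n * (real (length w) / real Q) + real Q"
        proof -
          have "real T * real Q * (A + \<epsilon>/3) \<le> real n * (A + \<epsilon>/3)" using TQ Agt \<epsilon> by (intro mult_right_mono) auto
          moreover have "real T * real (length w) \<le> real n * (real (length w) / real Q)"
          proof -
            have "real T \<le> real n / real Q" using TQ Qp by (simp add: field_simps)
            then have "real T * real (length w) \<le> real n / real Q * real (length w)" by (intro mult_right_mono) auto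
            then show ?thesis by simp
          qed
          ultimately show ?thesis by linarith
        qed
        finally have "real (cntw x w n) / real n \<le> (A + \<epsilon>/3) + real (length w) / real Q + real Q / real n"
          using npos by (simp add: field_simps)
        then show ?thesis using Qn N(3) unfolding Q_def of_nat_power by linarith
      qed
      show "norm (real (cntw x w n) / real n - A) < \<epsilon>" using lower upper by (simp add: abs_less_iff)
    qed
  qed
qed

end


lemma line_inj_aux1:
  assumes L: "is_line_fin x n i j l" and L': "is_line_fin x n i' j' l'"
    and k: "k < l" and k': "k' < l'" and e1: "i + k = i' + k'" and e2: "j + k = j' + k'"
    and lt: "k < k'"
  shows False
proof -
  define d where "d = k' - k"
  have i: "i = i' + d" and j: "j = j' + d" using e1 e2 lt by (auto simp: d_def)
  have d1: "d \<ge> 1" using lt by (simp add: d_def)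
  have "min i j > 0" using i j d1 by simp
  then have ne: "x (i - 1) \<noteq> x (j - 1)" using L by (simp add: is_line_fin_def)
  have "d - 1 < l'" using k' d1 by (simp add: d_def)
  then have "x (i' + (d - 1)) = x (j' + (d - 1))" using L' by (simp add: is_line_fin_def)
  moreover have "i' + (d - 1) = i - 1" "j' + (d - 1) = j - 1" using i j d1 by auto
  ultimately show False using ne by simp
qed

lemma line_inj_aux2:
  assumes L: "is_line_fin x n i j l" and L': "is_line_fin x n i j l'" and lt: "l < l'"
  shows False
proof -
  have "i + l' \<le> n" "j + l' \<le> n" using L' by (auto simp: is_line_fin_def)
  then have "max i j + l < n" using lt by simp
  then have "x (i + l) \<noteq> x (j + l)" using L by (simp add: is_line_fin_def)
  moreover have "x (i + l) = x (j + l)" using L' lt by (simp add: is_line_fin_def)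
  ultimately show False by simp
qed

lemma line_inj:
  assumes L: "is_line_fin x n i j l" and L': "is_line_fin x n i' j' l'"
    and k: "k < l" and k': "k' < l'" and e1: "i + k = i' + k'" and e2: "j + k = j' + k'"
  shows "i = i' \<and> j = j' \<and> l = l' \<and> k = k'"
proof -
  have "\<not> k < k'" using line_inj_aux1[OF L L' k k' e1 e2] by blast
  moreover have "\<not> k' < k" using line_inj_aux1[OF L' L k' k e1[symmetric] e2[symmetric]] by blast
  ultimately have kk: "k = k'" by simp
  then have ii: "i = i'" "j = j'" using e1 e2 by auto
  have "\<not> l < l'" using line_inj_aux2[OF L] L' ii by blast
  moreover have "\<not> l' < l" using line_inj_aux2[OF L'] L ii by blast
  ultimately show ?thesis using kk ii by simp
qed

lemma line_surj:
  assumes ab: "a \<noteq> b" "a + ell \<le> n" "b + ell \<le> n" and ag: "\<forall>k<ell. x (a + k) = x (b + k)" and ell: "ell \<ge> 1"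
  shows "\<exists>i j l k. is_line_fin x n i j l \<and> k < l \<and> ell \<le> l \<and> a = i + k \<and> b = j + k \<and> i < n \<and> j < n \<and> l \<le> n"
proof -
  define P where "P t \<longleftrightarrow> t = min a b \<or> x (a - t - 1) \<noteq> x (b - t - 1)" for t
  define t where "t = (LEAST t. P t)"
  have Pt: "P t" unfolding t_def by (rule LeastI[of P "min a b"]) (simp add: P_def)
  have tle: "t \<le> min a b" unfolding t_def by (rule Least_le) (simp add: P_def)
  have before: "x (a - s - 1) = x (b - s - 1)" if "s < t" for s
    using not_less_Least[OF that[unfolded t_def]] by (simp add: P_def)
  define i where "i = a - t"
  define j where "j = b - t"
  have ai: "a = i + t" and bj: "b = j + t" using tle by (auto simp: i_def j_def)
  have agree: "x (i + k) = x (j + k)" if "k < t + ell" for k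
  proof (cases "k < t")
    case True
    have "t - k - 1 < t" using True by simp
    from before[OF this] have "x (a - (t - k - 1) - 1) = x (b - (t - k - 1) - 1)" .
    moreover have "a - (t - k - 1) - 1 = i + k" "b - (t - k - 1) - 1 = j + k" using True ai bj by auto
    ultimately show ?thesis by simp
  next
    case False
    then have "k - t < ell" using that by simp
    then have "x (a + (k - t)) = x (b + (k - t))" using ag by simp
    moreover have "a + (k - t) = i + k" "b + (k - t) = j + k" using False ai bj by auto
    ultimately show ?thesis by simp
  qed
  have mx: "max i j + t + ell \<le> n" using ab ai bj by auto
  define Q where "Q r \<longleftrightarrow> max i j + r = n \<or> x (i + r) \<noteq> x (j + r)" for r
  define l where "l = (LEAST r. Q r)"
  have Qw: "Q (n - max i j)" unfolding Q_def using mx by (intro disjI1) simp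
  have Ql: "Q l" unfolding l_def by (rule LeastI[of Q, OF Qw])
  have lle: "l \<le> n - max i j" unfolding l_def by (rule Least_le[of Q, OF Qw])
  have notQ: "\<not> Q r" if "r < l" for r using not_less_Least[OF that[unfolded l_def]] .
  have lge: "t + ell \<le> l"
  proof (rule ccontr)
    assume "\<not> t + ell \<le> l"
    then have "l < t + ell" by simp
    then have "\<not> Q l" using agree mx by (simp add: Q_def)
    then show False using Ql by simp
  qed
  have ij: "i \<noteq> j" using ab ai bj by auto
  have line: "is_line_fin x n i j l"
    unfolding is_line_fin_def
  proof (intro conjI impI allI)
    show "i + l \<le> n" "j + l \<le> n" using lle mx by auto
    show "i \<noteq> j" by (rule ij)
    show "x (i + k) = x (j + k)" if "k < l" for k using notQ[OF that] by (simp add: Q_def)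
    show "x (i - 1) \<noteq> x (j - 1)" if "0 < min i j"
    proof -
      have "t \<noteq> min a b" using that ai bj by auto
      then have "x (a - t - 1) \<noteq> x (b - t - 1)" using Pt by (simp add: P_def)
      then show ?thesis by (simp add: i_def j_def)
    qed
    show "x (i + l) \<noteq> x (j + l)" if "max i j + l < n" using Ql that by (simp add: Q_def)
  qed
  show ?thesis
  proof (intro exI conjI)
    show "is_line_fin x n i j l" by (rule line)
    show "t < l" using lge ell by simp
    show "ell \<le> l" using lge by simp
    show "a = i + t" "b = j + t" by (rule ai, rule bj)
    show "i < n" "j < n" using mx ell by auto
    show "l \<le> n" using lle by simp
  qed
qed


definition Lset :: "(nat \<Rightarrow> bool) \<Rightarrow> nat \<Rightarrow> nat \<Rightarrow> (nat \<times> nat) set" where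
  "Lset x n l = {(i, j). i < n \<and> j < n \<and> is_line_fin x n i j l}"

definition Tset :: "(nat \<Rightarrow> bool) \<Rightarrow> nat \<Rightarrow> nat set \<Rightarrow> (nat \<times> (nat \<times> nat) \<times> nat) set" where
  "Tset x n A = Sigma A (\<lambda>l. Lset x n l \<times> {..<l})"

definition pt :: "nat \<times> (nat \<times> nat) \<times> nat \<Rightarrow> nat \<times> nat" where
  "pt = (\<lambda>(l, (i, j), k). (i + k, j + k))"

lemma finite_Lset: "finite (Lset x n l)"
  by (rule finite_subset[of _ "{..<n} \<times> {..<n}"]) (auto simp: Lset_def)

lemma N_lines_Lset: "N_lines x n l = card (Lset x n l)"
  by (simp add: N_lines_def Lset_def)

lemma card_Tset: "finite A \<Longrightarrow> card (Tset x n A) = (\<Sum>l\<in>A. l * N_lines x n l)"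
  unfolding Tset_def
  by (subst card_SigmaI) (auto simp: finite_Lset card_cartesian_product N_lines_Lset mult.commute)

lemma pt_inj: "inj_on pt (Tset x n A)"
proof (rule inj_onI)
  fix u v assume u: "u \<in> Tset x n A" and v: "v \<in> Tset x n A" and e: "pt u = pt v"
  obtain l i j k where U: "u = (l, (i, j), k)" by (cases u) auto
  obtain l' i' j' k' where V: "v = (l', (i', j'), k')" by (cases v) auto
  have "is_line_fin x n i j l" "k < l" "is_line_fin x n i' j' l'" "k' < l'"
    using u v U V by (auto simp: Tset_def Lset_def)
  moreover have "i + k = i' + k'" "j + k = j' + k'" using e U V by (auto simp: pt_def)
  ultimately show "u = v" using line_inj U V by metis
qed

lemma pt_image: "pt ` Tset x n A \<subseteq> {(a, b). a < n \<and> b < n \<and> a \<noteq> b}"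
proof
  fix p assume "p \<in> pt ` Tset x n A"
  then obtain l i j k where T: "l \<in> A" "(i, j) \<in> Lset x n l" "k < l" "p = pt (l, (i, j), k)"
    unfolding Tset_def by (auto simp del: pt_def)
  then have L: "is_line_fin x n i j l" by (simp add: Lset_def)
  then have "i + l \<le> n" "j + l \<le> n" "i \<noteq> j" by (simp_all add: is_line_fin_def)
  then show "p \<in> {(a, b). a < n \<and> b < n \<and> a \<noteq> b}" using T(3,4) by (simp add: pt_def)
qed

lemma card_Tset_le: "card (Tset x n A) \<le> n * n"
proof -
  have "card (Tset x n A) = card (pt ` Tset x n A)" using pt_inj by (simp add: card_image)
  also have "\<dots> \<le> card ({..<n} \<times> {..<n})"
  proof (rule card_mono)
    show "finite ({..<n} \<times> {..<n})" by simp
    show "pt ` Tset x n A \<subseteq> {..<n} \<times> {..<n}" using pt_image[of x n A] by fastforce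
  qed
  finally show ?thesis by simp
qed

lemma RR_fin_eq: "RR_fin x ell n = real (card (Tset x n {ell..n})) / (real n ^ 2 - real n)"
proof -
  have "RR_fin x ell n = (\<Sum>l\<in>{ell..n}. real l * real (N_lines x n l)) / (real n ^ 2 - real n)"
    unfolding RR_fin_def lambda_l_def by (simp add: sum_divide_distrib)
  also have "(\<Sum>l\<in>{ell..n}. real l * real (N_lines x n l)) = real (card (Tset x n {ell..n}))"
    by (simp add: card_Tset)
  finally show ?thesis .
qed

lemma Tset_lower:
  assumes ell: "ell \<ge> 1"
  shows "{(a, b). a \<noteq> b \<and> a + ell \<le> n \<and> b + ell \<le> n \<and> (\<forall>k<ell. x (a + k) = x (b + k))} \<subseteq> pt ` Tset x n {ell..n}"
proof
  fix p assume "p \<in> {(a, b). a \<noteq> b \<and> a + ell \<le> n \<and> b + ell \<le> n \<and> (\<forall>k<ell. x (a + k) = x (b + k))}"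
  then obtain a b where p: "p = (a, b)" "a \<noteq> b" "a + ell \<le> n" "b + ell \<le> n" "\<forall>k<ell. x (a + k) = x (b + k)" by blast
  obtain i j l k where L: "is_line_fin x n i j l" "k < l" "ell \<le> l" "a = i + k" "b = j + k" "i < n" "j < n" "l \<le> n"
    using line_surj[OF p(2,3,4,5) ell] by blast
  have "(l, (i, j), k) \<in> Tset x n {ell..n}" using L by (auto simp: Tset_def Lset_def)
  moreover have "pt (l, (i, j), k) = p" using L p by (simp add: pt_def)
  ultimately show "p \<in> pt ` Tset x n {ell..n}" by force
qed

definition Dset :: "(nat \<Rightarrow> bool) \<Rightarrow> nat \<Rightarrow> nat \<Rightarrow> (nat \<times> nat) set" where
  "Dset x n h = Sigma {..<n} (\<lambda>a. {b. b < n \<and> b \<noteq> a \<and> (\<forall>k<h. x (a + k) = x (b + k))})"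

lemma card_Dset:
  assumes g: "g > 0" and H: "\<forall>a p. 0 < p \<longrightarrow> p < g \<longrightarrow> \<not> (\<forall>k<h. x (a + k) = x (a + k + p))"
  shows "card (Dset x n h) \<le> n * ((n - 1) div g + 1)"
proof -
  have fib: "card {b. b < n \<and> b \<noteq> a \<and> (\<forall>k<h. x (a + k) = x (b + k))} \<le> (n - 1) div g + 1" for a
  proof -
    let ?F = "{b. b < n \<and> b \<noteq> a \<and> (\<forall>k<h. x (a + k) = x (b + k))}"
    have sep: "b div g < b' div g" if b: "b \<in> ?F" "b' \<in> ?F" "b < b'" for b b'
    proof -
      have "\<not> b' - b < g"
      proof
        assume lt: "b' - b < g"
        have per: "\<forall>k<h. x (b + k) = x (b + k + (b' - b))"
        proof (intro allI impI)
          fix k assume "k < h"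
          then have "x (a + k) = x (b + k)" "x (a + k) = x (b' + k)" using b by auto
          moreover have "b + k + (b' - b) = b' + k" using b by simp
          ultimately show "x (b + k) = x (b + k + (b' - b))" by (simp only:)
        qed
        have p0: "0 < b' - b" using b(3) by simp
        from H[rule_format, OF p0 lt, of b] per show False by blast
      qed
      then have "b + g \<le> b'" using b(3) by simp
      then have "(b + g) div g \<le> b' div g" by (rule div_le_mono)
      then show ?thesis using g by simp
    qed
    have "inj_on (\<lambda>b. b div g) ?F"
    proof (rule inj_onI)
      fix b b' assume "b \<in> ?F" "b' \<in> ?F" "b div g = b' div g"
      then show "b = b'" using sep[of b b'] sep[of b' b] by (cases "b < b'"; cases "b' < b") auto
    qed
    moreover have "(\<lambda>b. b div g) ` ?F \<subseteq> {..(n - 1) div g}" by (auto intro: div_le_mono)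
    ultimately have "card ?F \<le> card {..(n - 1) div g}"
    proof -
      assume inj: "inj_on (\<lambda>b. b div g) ?F" and im: "(\<lambda>b. b div g) ` ?F \<subseteq> {..(n - 1) div g}"
      have "card ?F = card ((\<lambda>b. b div g) ` ?F)" using inj by (simp add: card_image)
      also have "\<dots> \<le> card {..(n - 1) div g}" by (rule card_mono[OF _ im]) simp
      finally show ?thesis .
    qed
    then show ?thesis by simp
  qed
  have "card (Dset x n h) = (\<Sum>a<n. card {b. b < n \<and> b \<noteq> a \<and> (\<forall>k<h. x (a + k) = x (b + k))})"
    unfolding Dset_def by (rule card_SigmaI) auto
  also have "\<dots> \<le> (\<Sum>a<n. (n - 1) div g + 1)" by (intro sum_mono fib)
  finally show ?thesis by simp
qed

lemma finite_Dset: "finite (Dset x n h)"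
  unfolding Dset_def by auto

lemma tail_bound:
  assumes h: "h \<ge> 1" and A: "\<forall>l\<in>A. 2 * h \<le> l"
  shows "card (Tset x n A) \<le> 2 * card (Dset x n h)"
proof -
  let ?D = "Dset x n h"
  let ?sh = "\<lambda>(a, b). (a + (h - 1), b + (h - 1))"
  have sub: "pt ` Tset x n A \<subseteq> ?D \<union> ?sh ` ?D"
  proof
    fix p assume "p \<in> pt ` Tset x n A"
    then obtain l i j k where T: "l \<in> A" "is_line_fin x n i j l" "i < n" "j < n" "k < l" "p = (i + k, j + k)"
      by (auto simp: Tset_def Lset_def pt_def)
    have lh: "2 * h \<le> l" using A T(1) by blast
    have ag: "\<forall>k<l. x (i + k) = x (j + k)" "i + l \<le> n" "j + l \<le> n" "i \<noteq> j" using T(2) by (auto simp: is_line_fin_def)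
    show "p \<in> ?D \<union> ?sh ` ?D"
    proof (cases "k + h \<le> l")
      case True
      have "\<forall>s<h. x (i + k + s) = x (j + k + s)" using ag True by (auto simp: add.assoc)
      then have "(i + k, j + k) \<in> ?D" using ag T(5) by (auto simp: Dset_def)
      then show ?thesis using T(6) by simp
    next
      case False
      define a where "a = i + k - (h - 1)"
      define b where "b = j + k - (h - 1)"
      have kh: "k \<ge> h - 1" using False lh by simp
      have "\<forall>s<h. x (a + s) = x (b + s)"
      proof (intro allI impI)
        fix s assume "s < h"
        then have "k - (h - 1) + s < l" using kh T(5) by simp
        then have "x (i + (k - (h - 1) + s)) = x (j + (k - (h - 1) + s))" using ag by blast
        moreover have "a + s = i + (k - (h - 1) + s)" "b + s = j + (k - (h - 1) + s)" using kh by (auto simp: a_def b_def)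
        ultimately show "x (a + s) = x (b + s)" by (simp only:)
      qed
      moreover have "a < n" "b < n" "a \<noteq> b" using ag T(5) kh by (auto simp: a_def b_def)
      ultimately have "(a, b) \<in> ?D" by (auto simp: Dset_def)
      moreover have "p = ?sh (a, b)" using T(6) kh by (simp add: a_def b_def)
      ultimately show ?thesis by blast
    qed
  qed
  have "card (Tset x n A) = card (pt ` Tset x n A)" using pt_inj by (simp add: card_image)
  also have "\<dots> \<le> card (?D \<union> ?sh ` ?D)" by (rule card_mono) (use sub finite_Dset in auto)
  also have "\<dots> \<le> card ?D + card (?sh ` ?D)" by (rule card_Un_le)
  also have "card (?sh ` ?D) \<le> card ?D" by (rule card_image_le[OF finite_Dset])
  finally show ?thesis by simp
qed


lemma C1_card: "C1 P 0 L = card {r. r < L \<and> P r}"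
proof (induction L)
  case 0 then show ?case by (simp add: C1_def)
next
  case (Suc L)
  show ?case
  proof (cases "P L")
    case True
    then have "{r. r < Suc L \<and> P r} = insert L {r. r < L \<and> P r}" by auto
    then have "card {r. r < Suc L \<and> P r} = Suc (card {r. r < L \<and> P r})" by simp
    then show ?thesis using Suc True by (simp add: C1_def)
  next
    case False
    then have "{r. r < Suc L \<and> P r} = {r. r < L \<and> P r}" using less_Suc_eq by auto
    then show ?thesis using Suc False by (simp add: C1_def)
  qed
qed

definition flip :: "nat \<Rightarrow> bool list \<Rightarrow> bool list" where
  "flip l u = u[0 := \<not> u ! 0, Suc l := \<not> u ! Suc l]"

definition Sset :: "(nat \<Rightarrow> bool) \<Rightarrow> bool list \<Rightarrow> nat \<Rightarrow> nat set" where
  "Sset x u n = {i. 1 \<le> i \<and> i < n \<and> occ x u (i - 1)}"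

lemma card_Sset: "card (Sset x u n) = cntw x u (n - 1)"
proof -
  have "Sset x u n = Suc ` {r. r < n - 1 \<and> occ x u r}"
  proof (intro equalityI subsetI)
    fix i assume "i \<in> Sset x u n"
    then have h: "i = Suc (i - 1)" "i - 1 < n - 1" "occ x u (i - 1)" by (auto simp: Sset_def)
    show "i \<in> Suc ` {r. r < n - 1 \<and> occ x u r}" by (rule image_eqI[of _ _ "i - 1"]) (use h in auto)
  next
    fix i assume "i \<in> Suc ` {r. r < n - 1 \<and> occ x u r}"
    then show "i \<in> Sset x u n" by (auto simp: Sset_def)
  qed
  then have "card (Sset x u n) = card {r. r < n - 1 \<and> occ x u r}" by (simp add: card_image)
  then show ?thesis by (simp add: cntw_def C1_card)
qed

lemma finite_Sset: "finite (Sset x u n)"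
  by (rule finite_subset[of _ "{..<n}"]) (auto simp: Sset_def)

definition Wl :: "nat \<Rightarrow> bool list set" where
  "Wl l = {u. length u = Suc (Suc l)}"

lemma finite_Wl: "finite (Wl l)"
proof -
  have "Wl l = {u. set u \<subseteq> UNIV \<and> length u = Suc (Suc l)}" by (simp add: Wl_def)
  then show ?thesis using finite_lists_length_eq[of "UNIV :: bool set"] by simp
qed

lemma length_flip: "length (flip l u) = length u" by (simp add: flip_def)

lemma flip_nth:
  assumes "length u = Suc (Suc l)" "k < Suc (Suc l)"
  shows "flip l u ! k = (if k = 0 \<or> k = Suc l then \<not> u ! k else u ! k)"
  using assms by (auto simp: flip_def nth_list_update)

lemma K_decomp:
  "K_set x l \<inter> ({..<n} \<times> {..<n}) = (\<Union>u\<in>Wl l. Sset x u n \<times> Sset x (flip l u) n)"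
proof (intro equalityI subsetI)
  fix p assume p: "p \<in> K_set x l \<inter> ({..<n} \<times> {..<n})"
  obtain i j where ij: "p = (i, j)" by (cases p)
  have K: "i \<noteq> j" "0 < min i j" "\<forall>k<l. x (i + k) = x (j + k)" "x (i - 1) \<noteq> x (j - 1)" "x (i + l) \<noteq> x (j + l)"
      "i < n" "j < n"
    using p ij by (auto simp: K_set_def is_inner_line_inf_def)
  define u where "u = map (\<lambda>k. x (i - 1 + k)) [0..<Suc (Suc l)]"
  have lu: "length u = Suc (Suc l)" by (simp add: u_def)
  have ou: "occ x u (i - 1)" by (simp add: occ_def u_def del: upt_Suc)
  have of: "occ x (flip l u) (j - 1)"
    unfolding occ_def length_flip lu
  proof (intro allI impI)
    fix k assume k: "k < Suc (Suc l)"
    have uk: "u ! k = x (i - 1 + k)" using k by (simp add: u_def del: upt_Suc)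
    show "x (j - 1 + k) = flip l u ! k"
    proof (cases "k = 0")
      case True then show ?thesis using flip_nth[OF lu k] uk K(4) by simp
    next
      case False
      show ?thesis
      proof (cases "k = Suc l")
        case True
        have "i - 1 + k = i + l" "j - 1 + k = j + l" using True K(2) by auto
        then show ?thesis using flip_nth[OF lu k] uk K(5) True by simp
      next
        case F2: False
        have "k - 1 < l" using k False F2 by simp
        then have "x (i + (k - 1)) = x (j + (k - 1))" using K(3) by blast
        moreover have "i - 1 + k = i + (k - 1)" "j - 1 + k = j + (k - 1)" using False K(2) by auto
        ultimately show ?thesis using flip_nth[OF lu k] uk False F2 by simp
      qed
    qed
  qed
  have "i \<in> Sset x u n" "j \<in> Sset x (flip l u) n" using ou of K by (auto simp: Sset_def)
  then show "p \<in> (\<Union>u\<in>Wl l. Sset x u n \<times> Sset x (flip l u) n)" using ij lu by (auto simp: Wl_def)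
next
  fix p assume "p \<in> (\<Union>u\<in>Wl l. Sset x u n \<times> Sset x (flip l u) n)"
  then obtain u i j where p: "p = (i, j)" and lu: "length u = Suc (Suc l)" and
    i: "1 \<le> i" "i < n" "occ x u (i - 1)" and j: "1 \<le> j" "j < n" "occ x (flip l u) (j - 1)"
    by (auto simp: Wl_def Sset_def)
  have xi: "x (i - 1 + k) = u ! k" if "k < Suc (Suc l)" for k using i(3) that lu by (simp add: occ_def)
  have xj: "x (j - 1 + k) = flip l u ! k" if "k < Suc (Suc l)" for k using j(3) that lu by (simp add: occ_def length_flip)
  have e0: "x (i - 1) \<noteq> x (j - 1)" using xi[of 0] xj[of 0] flip_nth[OF lu, of 0] by simp
  have el: "x (i + l) \<noteq> x (j + l)"
  proof -
    have "x (i - 1 + Suc l) \<noteq> x (j - 1 + Suc l)" using xi[of "Suc l"] xj[of "Suc l"] flip_nth[OF lu, of "Suc l"] by simp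
    moreover have "i - 1 + Suc l = i + l" "j - 1 + Suc l = j + l" using i j by auto
    ultimately show ?thesis by simp
  qed
  have ag: "\<forall>k<l. x (i + k) = x (j + k)"
  proof (intro allI impI)
    fix k assume k: "k < l"
    have "x (i - 1 + Suc k) = x (j - 1 + Suc k)" using xi[of "Suc k"] xj[of "Suc k"] flip_nth[OF lu, of "Suc k"] k by simp
    moreover have "i - 1 + Suc k = i + k" "j - 1 + Suc k = j + k" using i j by auto
    ultimately show "x (i + k) = x (j + k)" by simp
  qed
  have "i \<noteq> j" using e0 by auto
  then show "p \<in> K_set x l \<inter> ({..<n} \<times> {..<n})"
    using p e0 el ag i j by (auto simp: K_set_def is_inner_line_inf_def)
qed

lemma occ_unique: "occ x u i \<Longrightarrow> occ x u' i \<Longrightarrow> length u = length u' \<Longrightarrow> u = u'"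
  by (auto simp: occ_def intro: nth_equalityI)

lemma card_K:
  "card (K_set x l \<inter> ({..<n} \<times> {..<n})) = (\<Sum>u\<in>Wl l. cntw x u (n - 1) * cntw x (flip l u) (n - 1))"
proof -
  have "card (\<Union>u\<in>Wl l. Sset x u n \<times> Sset x (flip l u) n) = (\<Sum>u\<in>Wl l. card (Sset x u n \<times> Sset x (flip l u) n))"
  proof (rule card_UN_disjoint)
    show "finite (Wl l)" by (rule finite_Wl)
    show "\<forall>u\<in>Wl l. finite (Sset x u n \<times> Sset x (flip l u) n)" by (simp add: finite_Sset)
    show "\<forall>u\<in>Wl l. \<forall>u'\<in>Wl l. u \<noteq> u' \<longrightarrow> (Sset x u n \<times> Sset x (flip l u) n) \<inter> (Sset x u' n \<times> Sset x (flip l u') n) = {}"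
    proof (intro ballI impI)
      fix u u' assume u: "u \<in> Wl l" "u' \<in> Wl l" "u \<noteq> u'"
      show "(Sset x u n \<times> Sset x (flip l u) n) \<inter> (Sset x u' n \<times> Sset x (flip l u') n) = {}"
      proof (rule ccontr)
        assume "\<not> ?thesis"
        then obtain i where "i \<in> Sset x u n" "i \<in> Sset x u' n" by auto
        then have "occ x u (i - 1)" "occ x u' (i - 1)" by (auto simp: Sset_def)
        then have "u = u'" using occ_unique u by (auto simp: Wl_def)
        then show False using u by simp
      qed
    qed
  qed
  then show ?thesis using K_decomp[of x l n] by (simp add: card_cartesian_product card_Sset)
qed


lemma bd_lim:
  fixes a b :: "nat \<Rightarrow> real"
  assumes a: "(\<lambda>n. a n / real n) \<longlonglongrightarrow> f" and d: "\<And>n. \<bar>b n - a n\<bar> \<le> C"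
  shows "(\<lambda>n. b n / real n) \<longlonglongrightarrow> f"
proof -
  have z: "(\<lambda>n. (b n - a n) / real n) \<longlonglongrightarrow> 0"
  proof (rule tendsto_sandwich[of "\<lambda>n. - C / real n" _ _ "\<lambda>n. C / real n"])
    show "\<forall>\<^sub>F n in sequentially. - C / real n \<le> (b n - a n) / real n"
    proof (intro always_eventually allI)
      fix n
      have "- C \<le> b n - a n" using d[of n] by (simp add: abs_le_iff)
      from divide_right_mono[OF this, of "real n"] show "- C / real n \<le> (b n - a n) / real n" by simp
    qed
    show "\<forall>\<^sub>F n in sequentially. (b n - a n) / real n \<le> C / real n"
    proof (intro always_eventually allI)
      fix n
      have "b n - a n \<le> C" using d[of n] by (simp add: abs_le_iff)
      from divide_right_mono[OF this, of "real n"] show "(b n - a n) / real n \<le> C / real n" by simp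
    qed
    show "(\<lambda>n. - C / real n) \<longlonglongrightarrow> 0" using lim_const_over_n[of "- C"] by simp
    show "(\<lambda>n. C / real n) \<longlonglongrightarrow> 0" by (rule lim_const_over_n)
  qed
  have "(\<lambda>n. a n / real n + (b n - a n) / real n) \<longlonglongrightarrow> f + 0" by (intro tendsto_intros a z)
  moreover have "a n / real n + (b n - a n) / real n = b n / real n" for n by (simp add: diff_divide_distrib)
  ultimately show ?thesis by simp
qed

lemma C1_shift_diff: "C1 P 0 (n - c) \<le> C1 P 0 n \<and> C1 P 0 n \<le> C1 P 0 (n - c) + c"
proof -
  have "C1 P 0 n = C1 P 0 ((n - c) + (n - (n - c)))" by simp
  also have "\<dots> = C1 P 0 (n - c) + C1 P (0 + (n - c)) (n - (n - c))" by (rule C1_add)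
  finally have e: "C1 P 0 n = C1 P 0 (n - c) + C1 P (0 + (n - c)) (n - (n - c))" .
  have "C1 P (0 + (n - c)) (n - (n - c)) \<le> n - (n - c)" by (rule C1_le)
  moreover have "n - (n - c) \<le> c" by simp
  ultimately show ?thesis using e by linarith
qed

lemma cntw_shift:
  assumes "(\<lambda>n. real (cntw x w n) / real n) \<longlonglongrightarrow> f"
  shows "(\<lambda>n. real (cntw x w (n - c)) / real n) \<longlonglongrightarrow> f"
proof (rule bd_lim[OF assms, of _ "real c"])
  fix n
  show "\<bar>real (cntw x w (n - c)) - real (cntw x w n)\<bar> \<le> real c"
    using C1_shift_diff[of "occ x w" n c] unfolding cntw_def by linarith
qed

definition fr :: "(nat \<Rightarrow> bool) \<Rightarrow> bool list \<Rightarrow> real" where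
  "fr x w = lim (\<lambda>n. real (cntw x w n) / real n)"

lemma fr_lim:
  assumes "\<forall>w. \<exists>A. (\<lambda>n. real (cntw x w n) / real n) \<longlonglongrightarrow> A"
  shows "(\<lambda>n. real (cntw x w n) / real n) \<longlonglongrightarrow> fr x w"
proof -
  obtain A where "(\<lambda>n. real (cntw x w n) / real n) \<longlonglongrightarrow> A" using assms by blast
  then show ?thesis unfolding fr_def by (simp add: limI)
qed

definition dens :: "(nat \<Rightarrow> bool) \<Rightarrow> nat \<Rightarrow> real" where
  "dens x l = (\<Sum>u\<in>Wl l. fr x u * fr x (flip l u))"

lemma K_lim:
  assumes H1: "\<forall>w. \<exists>A. (\<lambda>n. real (cntw x w n) / real n) \<longlonglongrightarrow> A"
  shows "(\<lambda>n. real (card (K_set x l \<inter> ({..<n} \<times> {..<n}))) / real n ^ 2) \<longlonglongrightarrow> dens x l"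
proof -
  have "(\<lambda>n. \<Sum>u\<in>Wl l. (real (cntw x u (n - 1)) / real n) * (real (cntw x (flip l u) (n - 1)) / real n))
        \<longlonglongrightarrow> (\<Sum>u\<in>Wl l. fr x u * fr x (flip l u))"
    by (intro tendsto_sum tendsto_mult cntw_shift fr_lim[OF H1])
  moreover have "(\<Sum>u\<in>Wl l. (real (cntw x u (n - 1)) / real n) * (real (cntw x (flip l u) (n - 1)) / real n))
      = real (card (K_set x l \<inter> ({..<n} \<times> {..<n}))) / real n ^ 2" for n
    by (simp add: card_K sum_divide_distrib power2_eq_square)
  ultimately show ?thesis by (simp add: dens_def)
qed

lemma asymp_density_K:
  assumes H1: "\<forall>w. \<exists>A. (\<lambda>n. real (cntw x w n) / real n) \<longlonglongrightarrow> A"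
  shows "asymp_density (K_set x l) = dens x l"
  unfolding asymp_density_def using K_lim[OF H1] by (rule limI)

lemma dens_nonneg:
  assumes H1: "\<forall>w. \<exists>A. (\<lambda>n. real (cntw x w n) / real n) \<longlonglongrightarrow> A"
  shows "dens x l \<ge> 0"
  by (rule LIMSEQ_le_const[OF K_lim[OF H1]]) auto

lemma N_K_diff:
  "\<bar>real (N_lines x n l) - real (card (K_set x l \<inter> ({..<n} \<times> {..<n})))\<bar> \<le> real ((2 * l + 2) * n)"
proof -
  let ?L = "Lset x n l" and ?K = "K_set x l \<inter> ({..<n} \<times> {..<n})"
  let ?C = "{(i, j). (i, j) \<in> ?K \<and> i + l < n \<and> j + l < n}"
  let ?B = "({0} \<times> {..<n}) \<union> ({..<n} \<times> {0}) \<union> ({n - l..<n} \<times> {..<n}) \<union> ({..<n} \<times> {n - l..<n})"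
  have finB: "finite ?B" by simp
  have cardB: "card ?B \<le> (2 * l + 2) * n"
  proof -
    have "card ?B \<le> card ({0} \<times> {..<n} \<union> {..<n} \<times> {0} \<union> {n - l..<n} \<times> {..<n}) + card ({..<n} \<times> {n - l..<n})"
      by (rule card_Un_le)
    moreover have "card ({0} \<times> {..<n} \<union> {..<n} \<times> {0} \<union> {n - l..<n} \<times> {..<n}) \<le> card ({0} \<times> {..<n} \<union> {..<n} \<times> {0}) + card ({n - l..<n} \<times> {..<n})"
      by (rule card_Un_le)
    moreover have "card ({0} \<times> {..<n} \<union> {..<n} \<times> {0}) \<le> card ({0::nat} \<times> {..<n}) + card ({..<n} \<times> {0::nat})"
      by (rule card_Un_le)
    ultimately have "card ?B \<le> card ({0::nat} \<times> {..<n}) + card ({..<n} \<times> {0::nat}) + card ({n - l..<n} \<times> {..<n}) + card ({..<n} \<times> {n - l..<n})"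
      by linarith
    also have "\<dots> \<le> n + n + l * n + n * l"
    proof -
      have "n - (n - l) \<le> l" by simp
      then have h1: "(n - (n - l)) * n \<le> l * n" "n * (n - (n - l)) \<le> n * l" by (simp_all add: mult_le_mono)
      have "card ({0::nat} \<times> {..<n}) + card ({..<n} \<times> {0::nat}) + card ({n - l..<n} \<times> {..<n}) + card ({..<n} \<times> {n - l..<n})
         = n + n + (n - (n - l)) * n + n * (n - (n - l))" by (simp add: card_cartesian_product)
      then show ?thesis using h1 by linarith
    qed
    finally show ?thesis by (simp add: algebra_simps)
  qed
  have CL: "?C \<subseteq> ?L"
  proof
    fix p assume "p \<in> ?C"
    then obtain i j where p: "p = (i, j)" "(i, j) \<in> K_set x l" "i < n" "j < n" "i + l < n" "j + l < n" by blast
    then have "is_inner_line_inf x i j l" by (simp add: K_set_def)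
    then show "p \<in> ?L" using p by (auto simp: Lset_def is_line_fin_def is_inner_line_inf_def)
  qed
  have CK: "?C \<subseteq> ?K" by blast
  have LCB: "?L \<subseteq> ?C \<union> ?B"
  proof
    fix p assume pL: "p \<in> ?L"
    obtain i j where p: "p = (i, j)" by (cases p)
    have L: "i < n" "j < n" "is_line_fin x n i j l" using pL p by (auto simp: Lset_def)
    show "p \<in> ?C \<union> ?B"
    proof (cases "i = 0 \<or> j = 0 \<or> n \<le> i + l \<or> n \<le> j + l")
      case True then show ?thesis using p L by auto
    next
      case False
      then have "is_inner_line_inf x i j l" using L by (auto simp: is_line_fin_def is_inner_line_inf_def)
      then show ?thesis using p L False by (auto simp: K_set_def)
    qed
  qed
  have KCB: "?K \<subseteq> ?C \<union> ?B"
  proof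
    fix p assume pK: "p \<in> ?K"
    obtain i j where p: "p = (i, j)" by (cases p)
    show "p \<in> ?C \<union> ?B"
    proof (cases "n \<le> i + l \<or> n \<le> j + l")
      case True then show ?thesis using p pK by auto
    next
      case False then show ?thesis using p pK by auto
    qed
  qed
  have finC: "finite ?C" by (rule finite_subset[OF CK]) auto
  have finL: "finite ?L" by (rule finite_Lset)
  have finK: "finite ?K" by auto
  have "card ?L \<le> card (?C \<union> ?B)" by (rule card_mono[OF _ LCB]) (use finC finB in auto)
  also have "\<dots> \<le> card ?C + card ?B" by (rule card_Un_le)
  also have "card ?C \<le> card ?K" by (rule card_mono[OF finK CK])
  finally have u1: "card ?L \<le> card ?K + card ?B" by simp
  have "card ?K \<le> card (?C \<union> ?B)" by (rule card_mono[OF _ KCB]) (use finC finB in auto)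
  also have "\<dots> \<le> card ?C + card ?B" by (rule card_Un_le)
  also have "card ?C \<le> card ?L" by (rule card_mono[OF finL CL])
  finally have u2: "card ?K \<le> card ?L + card ?B" by simp
  show ?thesis using u1 u2 cardB unfolding N_lines_Lset by linarith
qed

lemma N_lim:
  assumes H1: "\<forall>w. \<exists>A. (\<lambda>n. real (cntw x w n) / real n) \<longlonglongrightarrow> A"
  shows "(\<lambda>n. real (N_lines x n l) / (real n ^ 2 - real n)) \<longlonglongrightarrow> dens x l"
proof -
  define Kc where "Kc n = real (card (K_set x l \<inter> ({..<n} \<times> {..<n})))" for n
  have "(\<lambda>n. (Kc n / real n) / real n) \<longlonglongrightarrow> dens x l"
    using K_lim[OF H1, of l] by (simp add: Kc_def power2_eq_square)
  then have "(\<lambda>n. (real (N_lines x n l) / real n) / real n) \<longlonglongrightarrow> dens x l"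
  proof (rule bd_lim)
    fix n
    have "\<bar>real (N_lines x n l) - Kc n\<bar> \<le> real ((2 * l + 2) * n)" using N_K_diff[of x n l] by (simp add: Kc_def)
    then have "\<bar>real (N_lines x n l) / real n - Kc n / real n\<bar> \<le> real (2 * l + 2)"
      by (cases "n = 0") (auto simp: diff_divide_distrib[symmetric] abs_divide field_simps)
    then show "\<bar>real (N_lines x n l) / real n - Kc n / real n\<bar> \<le> real (2 * l + 2)" .
  qed
  then have a: "(\<lambda>n. real (N_lines x n l) / real n ^ 2) \<longlonglongrightarrow> dens x l" by (simp add: power2_eq_square)
  have b: "(\<lambda>n. real n ^ 2 / (real n ^ 2 - real n)) \<longlonglongrightarrow> 1"
  proof -
    have "(\<lambda>n. inverse (1 - 1 / real n)) \<longlonglongrightarrow> inverse (1 - 0)"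
      by (intro tendsto_intros lim_const_over_n) simp
    moreover have "eventually (\<lambda>n. inverse (1 - 1 / real n) = real n ^ 2 / (real n ^ 2 - real n)) sequentially"
      using eventually_gt_at_top[of 1] by eventually_elim (simp add: field_simps power2_eq_square)
    ultimately show ?thesis using Lim_transform_eventually by fastforce
  qed
  have "(\<lambda>n. real (N_lines x n l) / real n ^ 2 * (real n ^ 2 / (real n ^ 2 - real n))) \<longlonglongrightarrow> dens x l * 1"
    by (intro tendsto_mult a b)
  moreover have "eventually (\<lambda>n. real (N_lines x n l) / real n ^ 2 * (real n ^ 2 / (real n ^ 2 - real n)) = real (N_lines x n l) / (real n ^ 2 - real n)) sequentially"
    using eventually_gt_at_top[of 0] by eventually_elim (simp add: field_simps)
  ultimately show ?thesis using Lim_transform_eventually by fastforce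
qed


lemma Tset_mono: "A \<subseteq> B \<Longrightarrow> Tset x n A \<subseteq> Tset x n B"
  unfolding Tset_def by auto

lemma Tset_le_n: "Tset x n A = Tset x n (A \<inter> {..n})"
  unfolding Tset_def Lset_def is_line_fin_def by auto

lemma finite_Tset: "finite (Tset x n A)"
proof -
  have "Tset x n A = Tset x n (A \<inter> {..n})" by (rule Tset_le_n)
  also have "finite \<dots>" unfolding Tset_def by (intro finite_SigmaI) (auto simp: finite_Lset)
  finally show ?thesis .
qed

lemma sum_reindex_ell: "(\<Sum>m<K. f (m + ell)) = (\<Sum>l\<in>{ell..<ell + K}. f l)" for K ell :: nat
proof (induction K)
  case 0 then show ?case by simp
next
  case (Suc K)
  have "{ell..<ell + Suc K} = insert (ell + K) {ell..<ell + K}" by auto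
  then show ?case using Suc by (simp add: add.commute)
qed

definition AK :: "(nat \<Rightarrow> bool) \<Rightarrow> nat \<Rightarrow> nat \<Rightarrow> nat \<Rightarrow> real" where
  "AK x ell K n = real (card (Tset x n {ell..<ell + K})) / (real n ^ 2 - real n)"

lemma AK_lim:
  assumes H1: "\<forall>w. \<exists>A. (\<lambda>n. real (cntw x w n) / real n) \<longlonglongrightarrow> A"
  shows "(\<lambda>n. AK x ell K n) \<longlonglongrightarrow> (\<Sum>m<K. real (m + ell) * dens x (m + ell))"
proof -
  have "(\<lambda>n. \<Sum>l\<in>{ell..<ell + K}. real l * (real (N_lines x n l) / (real n ^ 2 - real n)))
        \<longlonglongrightarrow> (\<Sum>l\<in>{ell..<ell + K}. real l * dens x l)"
    by (intro tendsto_sum tendsto_mult tendsto_const N_lim[OF H1])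
  moreover have "(\<Sum>l\<in>{ell..<ell + K}. real l * (real (N_lines x n l) / (real n ^ 2 - real n))) = AK x ell K n" for n
  proof -
    have "(\<Sum>l\<in>{ell..<ell + K}. real l * (real (N_lines x n l) / (real n ^ 2 - real n)))
        = (\<Sum>l\<in>{ell..<ell + K}. real (l * N_lines x n l)) / (real n ^ 2 - real n)"
      by (simp add: sum_divide_distrib)
    also have "\<dots> = AK x ell K n" by (simp add: AK_def card_Tset del: of_nat_mult) 
    finally show ?thesis .
  qed
  moreover have "(\<Sum>l\<in>{ell..<ell + K}. real l * dens x l) = (\<Sum>m<K. real (m + ell) * dens x (m + ell))"
    using sum_reindex_ell[of "\<lambda>l. real l * dens x l"] by simp
  ultimately show ?thesis by simp
qed

lemma denom_lim: "(\<lambda>n. real n * real n / (real n ^ 2 - real n)) \<longlonglongrightarrow> 1"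
proof -
  have "(\<lambda>n. inverse (1 - 1 / real n)) \<longlonglongrightarrow> inverse (1 - 0)"
    by (intro tendsto_intros lim_const_over_n) simp
  moreover have "eventually (\<lambda>n. inverse (1 - 1 / real n) = real n * real n / (real n ^ 2 - real n)) sequentially"
    using eventually_gt_at_top[of 1] by eventually_elim (simp add: field_simps power2_eq_square)
  ultimately show ?thesis using Lim_transform_eventually by fastforce
qed

lemma denom_nonneg: "real n ^ 2 - real n \<ge> 0"
proof (cases n)
  case 0 then show ?thesis by simp
next
  case (Suc m)
  then have "real n \<le> real n ^ 2" by (simp add: power2_eq_square)
  then show ?thesis by simp
qed

lemma partial_le1:
  assumes H1: "\<forall>w. \<exists>A. (\<lambda>n. real (cntw x w n) / real n) \<longlonglongrightarrow> A"
  shows "(\<Sum>m<K. real (m + ell) * dens x (m + ell)) \<le> 1"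
proof (rule LIMSEQ_le[OF AK_lim[OF H1] denom_lim])
  show "\<exists>N. \<forall>n\<ge>N. AK x ell K n \<le> real n * real n / (real n ^ 2 - real n)"
  proof (intro exI allI impI)
    fix n :: nat
    have "real (card (Tset x n {ell..<ell + K})) \<le> real n * real n"
      using card_Tset_le[of x n "{ell..<ell + K}"] by (metis of_nat_le_iff of_nat_mult)
    then show "AK x ell K n \<le> real n * real n / (real n ^ 2 - real n)"
      unfolding AK_def using denom_nonneg[of n] by (intro divide_right_mono) auto
  qed
qed


lemma RR_lower: "AK x ell K n \<le> RR_fin x ell n"
proof -
  have "Tset x n {ell..<ell + K} = Tset x n ({ell..<ell + K} \<inter> {..n})" by (rule Tset_le_n)
  also have "\<dots> \<subseteq> Tset x n {ell..n}" by (rule Tset_mono) auto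
  finally have "card (Tset x n {ell..<ell + K}) \<le> card (Tset x n {ell..n})"
    by (rule card_mono[OF finite_Tset])
  then show ?thesis unfolding AK_def RR_fin_eq using denom_nonneg[of n]
    by (intro divide_right_mono) auto
qed

lemma RR_upper:
  assumes h: "h \<ge> 1" and g: "g > 0"
    and H: "\<forall>a p. 0 < p \<longrightarrow> p < g \<longrightarrow> \<not> (\<forall>k<h. x (a + k) = x (a + k + p))"
    and K: "2 * h \<le> ell + K"
  shows "RR_fin x ell n \<le> AK x ell K n + 2 * real n * (real n / real g + 1) / (real n ^ 2 - real n)"
proof -
  have sub: "Tset x n {ell..n} \<subseteq> Tset x n {ell..<ell + K} \<union> Tset x n {ell + K..n}"
    unfolding Tset_def by auto
  have c1: "card (Tset x n {ell..n}) \<le> card (Tset x n {ell..<ell + K} \<union> Tset x n {ell + K..n})"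
    by (rule card_mono[OF _ sub]) (simp add: finite_Tset)
  have c2: "card (Tset x n {ell..<ell + K} \<union> Tset x n {ell + K..n}) \<le> card (Tset x n {ell..<ell + K}) + card (Tset x n {ell + K..n})" by (rule card_Un_le)
  have c3: "card (Tset x n {ell + K..n}) \<le> 2 * card (Dset x n h)"
    by (rule tail_bound[OF h]) (use K in auto)
  have c4: "card (Dset x n h) \<le> n * ((n - 1) div g + 1)" by (rule card_Dset[OF g H])
  have cn: "card (Tset x n {ell..n}) \<le> card (Tset x n {ell..<ell + K}) + 2 * (n * ((n - 1) div g + 1))"
    using c1 c2 c3 c4 by linarith
  have c: "real (card (Tset x n {ell..n})) \<le> real (card (Tset x n {ell..<ell + K})) + 2 * (real n * (real ((n - 1) div g) + 1))"
  proof -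
    have "real (card (Tset x n {ell..n})) \<le> real (card (Tset x n {ell..<ell + K}) + 2 * (n * ((n - 1) div g + 1)))"
      using cn by (simp only: of_nat_le_iff)
    then show ?thesis by (simp add: algebra_simps)
  qed
  have "real ((n - 1) div g) \<le> real n / real g"
  proof -
    have "real ((n - 1) div g) \<le> real (n - 1) / real g" by (rule of_nat_div_le_of_nat)
    also have "\<dots> \<le> real n / real g" using g by (intro divide_right_mono) auto
    finally show ?thesis .
  qed
  then have "real n * (real ((n - 1) div g) + 1) \<le> real n * (real n / real g + 1)"
    by (intro mult_left_mono) auto
  with c have c2: "real (card (Tset x n {ell..n})) \<le> real (card (Tset x n {ell..<ell + K})) + 2 * real n * (real n / real g + 1)"
    by linarith
  have "RR_fin x ell n = real (card (Tset x n {ell..n})) / (real n ^ 2 - real n)" by (rule RR_fin_eq)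
  also have "\<dots> \<le> (real (card (Tset x n {ell..<ell + K})) + 2 * real n * (real n / real g + 1)) / (real n ^ 2 - real n)"
    using c2 denom_nonneg[of n] by (intro divide_right_mono) auto
  also have "\<dots> = AK x ell K n + 2 * real n * (real n / real g + 1) / (real n ^ 2 - real n)"
    by (simp add: AK_def add_divide_distrib)
  finally show ?thesis .
qed


lemma tail_small:
  assumes g: "g > 0" and n: "real n \<ge> real g + 2"
  shows "2 * real n * (real n / real g + 1) / (real n ^ 2 - real n) \<le> 4 / real g"
proof -
  have gp: "real g > 0" using g by simp
  have np: "real n > 1" using n gp by linarith
  have den: "real n ^ 2 - real n = real n * (real n - 1)" by (simp add: power2_eq_square algebra_simps)
  have dpos: "real n * (real n - 1) > 0" using np by simp
  have e: "2 * real n * (real n / real g + 1) = 2 * real n * (real n + real g) / real g"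
    using gp by (simp add: field_simps)
  have "real n + real g \<le> 2 * real n - 2" using n by linarith
  then have "real n + real g \<le> 2 * (real n - 1)" by (simp add: algebra_simps)
  then have "2 * real n * (real n + real g) \<le> 2 * real n * (2 * (real n - 1))"
    using np by (intro mult_left_mono) auto
  then have "2 * real n * (real n + real g) / real g \<le> 4 * (real n * (real n - 1)) / real g"
    using gp by (intro divide_right_mono) (auto simp: algebra_simps)
  then have A: "2 * real n * (real n / real g + 1) \<le> 4 / real g * (real n * (real n - 1))"
    using e by (simp only: times_divide_eq_left)
  show ?thesis unfolding den using A by (simp only: pos_divide_le_eq[OF dpos])
qed

lemma RR_conv:
  fixes x :: "nat \<Rightarrow> bool" and ell :: nat
  assumes H1: "\<forall>w. \<exists>A. (\<lambda>n. real (cntw x w n) / real n) \<longlonglongrightarrow> A"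
    and H2: "\<forall>g. \<exists>h. \<forall>a p. 0 < p \<longrightarrow> p < g \<longrightarrow> \<not> (\<forall>k<h. x (a + k) = x (a + k + p))"
  defines "f \<equiv> \<lambda>m. real (m + ell) * dens x (m + ell)"
  shows "summable f" and "(\<lambda>n. RR_fin x ell n) \<longlonglongrightarrow> suminf f"
proof -
  have f0: "0 \<le> f m" for m unfolding f_def using dens_nonneg[OF H1] by simp
  show sf: "summable f"
    by (rule summableI_nonneg_bounded[OF f0]) (use partial_le1[OF H1] in \<open>simp add: f_def\<close>)
  define S where "S = suminf f"
  have PS: "(\<lambda>K. \<Sum>m<K. f m) \<longlonglongrightarrow> S" unfolding S_def by (rule summable_LIMSEQ[OF sf])
  have PSle: "(\<Sum>m<K. f m) \<le> S" for K unfolding S_def by (rule sum_le_suminf[OF sf]) (auto simp: f0)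
  show "(\<lambda>n. RR_fin x ell n) \<longlonglongrightarrow> suminf f"
    unfolding S_def[symmetric]
  proof (rule LIMSEQ_I)
    fix \<epsilon> :: real assume \<epsilon>: "\<epsilon> > 0"
    obtain g :: nat where g: "12 / \<epsilon> < real g" using reals_Archimedean2 by blast
    have gpos: "g > 0" using g \<epsilon> by (metis divide_pos_pos less_trans of_nat_0_less_iff zero_less_numeral)
    have g4: "4 / real g < \<epsilon> / 3"
    proof -
      have "12 < \<epsilon> * real g" using g \<epsilon> by (simp add: divide_less_eq mult.commute)
      then show ?thesis using gpos by (simp add: field_simps)
    qed
    obtain h0 where h0: "\<forall>a p. 0 < p \<longrightarrow> p < g \<longrightarrow> \<not> (\<forall>k<h0. x (a + k) = x (a + k + p))"
      using H2 by blast
    define h where "h = max h0 1"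
    have h1: "h \<ge> 1" by (simp add: h_def)
    have H: "\<forall>a p. 0 < p \<longrightarrow> p < g \<longrightarrow> \<not> (\<forall>k<h. x (a + k) = x (a + k + p))"
    proof (intro allI impI notI)
      fix a p assume ap: "0 < p" "p < g" and run: "\<forall>k<h. x (a + k) = x (a + k + p)"
      have "\<forall>k<h0. x (a + k) = x (a + k + p)" using run by (simp add: h_def)
      then show False using h0 ap by blast
    qed
    have e3: "\<epsilon> / 3 > 0" using \<epsilon> by simp
    obtain K0 where K0: "\<forall>K\<ge>K0. norm ((\<Sum>m<K. f m) - S) < \<epsilon> / 3"
      using LIMSEQ_D[OF PS e3] by blast
    define K where "K = max K0 (2 * h)"
    have KK: "2 * h \<le> ell + K" by (simp add: K_def)
    have "K \<ge> K0" by (simp add: K_def)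
    then have "norm ((\<Sum>m<K. f m) - S) < \<epsilon> / 3" using K0 by blast
    then have PSK: "S - (\<Sum>m<K. f m) < \<epsilon> / 3" unfolding real_norm_def abs_less_iff by linarith
    obtain n1 where n1: "\<forall>n\<ge>n1. norm (AK x ell K n - (\<Sum>m<K. f m)) < \<epsilon> / 3"
      using LIMSEQ_D[OF AK_lim[OF H1, of ell K] e3] unfolding f_def by blast
    show "\<exists>no. \<forall>n\<ge>no. norm (RR_fin x ell n - S) < \<epsilon>"
    proof (rule exI[of _ "max n1 (g + 2)"], intro allI impI)
      fix n assume n: "n \<ge> max n1 (g + 2)"
      have a: "\<bar>AK x ell K n - (\<Sum>m<K. f m)\<bar> < \<epsilon> / 3" using n1 n by auto
      have t: "2 * real n * (real n / real g + 1) / (real n ^ 2 - real n) \<le> 4 / real g"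
        by (rule tail_small[OF gpos]) (use n in simp)
      have up: "RR_fin x ell n \<le> AK x ell K n + 2 * real n * (real n / real g + 1) / (real n ^ 2 - real n)"
        by (rule RR_upper[OF h1 gpos H KK])
      have lo: "AK x ell K n \<le> RR_fin x ell n" by (rule RR_lower)
      have a1: "AK x ell K n - (\<Sum>m<K. f m) < \<epsilon> / 3" "(\<Sum>m<K. f m) - AK x ell K n < \<epsilon> / 3"
        using a unfolding abs_less_iff by linarith+
      show "norm (RR_fin x ell n - S) < \<epsilon>"
        unfolding real_norm_def abs_less_iff using a1 t up lo PSK PSle[of K] g4 by linarith
    qed
  qed
qed


lemma occ_count:
  assumes R: "R > 0" and H: "\<forall>s. \<exists>i. s \<le> i \<and> i < s + R \<and> (\<forall>k<ell. x (i + k) = x k)"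
  shows "(n - ell) div R \<le> card {a. a + ell \<le> n \<and> (\<forall>k<ell. x (a + k) = x k)}"
proof -
  define Oc where "Oc = {a. a + ell \<le> n \<and> (\<forall>k<ell. x (a + k) = x k)}"
  define M where "M = (n - ell) div R"
  define c where "c t = (SOME i. t * R \<le> i \<and> i < t * R + R \<and> (\<forall>k<ell. x (i + k) = x k))" for t
  have cP: "t * R \<le> c t \<and> c t < t * R + R \<and> (\<forall>k<ell. x (c t + k) = x k)" for t
    unfolding c_def by (rule someI_ex) (use H in blast)
  have cdiv: "c t div R = t" for t
  proof -
    have "t * R \<le> c t" "c t < (Suc t) * R" using cP[of t] by auto
    then show ?thesis using R by (metis div_nat_eqI mult.commute)
  qed
  have inj: "inj_on c {..<M}" by (rule inj_onI) (metis cdiv)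
  have im: "c ` {..<M} \<subseteq> Oc"
  proof
    fix i assume "i \<in> c ` {..<M}"
    then obtain t where t: "t < M" "i = c t" by blast
    have "Suc t * R \<le> M * R" using t(1) R by (intro mult_right_mono) auto
    also have "M * R \<le> n - ell" by (simp add: M_def div_times_less_eq_dividend)
    finally have "R + t * R \<le> n - ell" by simp
    then have "c t + ell \<le> n" using cP[of t] by linarith
    then show "i \<in> Oc" using cP[of t] t by (simp add: Oc_def)
  qed
  have finO: "finite Oc" by (rule finite_subset[of _ "{..n}"]) (auto simp: Oc_def)
  have "card {..<M} = card (c ` {..<M})" using inj by (simp add: card_image)
  also have "\<dots> \<le> card Oc" by (rule card_mono[OF finO im])
  finally show ?thesis by (simp add: M_def Oc_def)
qed

lemma RR_pos:
  fixes x :: "nat \<Rightarrow> bool" and ell :: nat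
  assumes ell: "ell \<ge> 1" and H3: "\<exists>R>0. \<forall>s. \<exists>i. s \<le> i \<and> i < s + R \<and> (\<forall>k<ell. x (i + k) = x k)"
  shows "\<exists>c>0. \<exists>N. \<forall>n\<ge>N. c \<le> RR_fin x ell n"
proof -
  obtain R where R: "R > 0" and H: "\<forall>s. \<exists>i. s \<le> i \<and> i < s + R \<and> (\<forall>k<ell. x (i + k) = x k)"
    using H3 by blast
  define r where "r = real R"
  have rp: "r > 0" using R by (simp add: r_def)
  have bound: "1 / (4 * r ^ 2) \<le> RR_fin x ell n" if n: "real n \<ge> 2 * real ell + 4 * r + 2" for n
  proof -
    define Oc where "Oc = {a. a + ell \<le> n \<and> (\<forall>k<ell. x (a + k) = x k)}"
    define P where "P = {(a, b). a \<noteq> b \<and> a + ell \<le> n \<and> b + ell \<le> n \<and> (\<forall>k<ell. x (a + k) = x (b + k))}"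
    have finO: "finite Oc" by (rule finite_subset[of _ "{..n}"]) (auto simp: Oc_def)
    have OO: "Oc \<times> Oc \<subseteq> P \<union> (\<lambda>a. (a, a)) ` Oc" by (auto simp: Oc_def P_def)
    have cardP: "card P \<le> card (Tset x n {ell..n})"
    proof -
      have "card P \<le> card (pt ` Tset x n {ell..n})"
        by (rule card_mono) (use Tset_lower[OF ell, of n x] finite_Tset in \<open>auto simp: P_def\<close>)
      also have "\<dots> \<le> card (Tset x n {ell..n})" by (rule card_image_le[OF finite_Tset])
      finally show ?thesis .
    qed
    have finP: "finite P" by (rule finite_subset[of _ "{..n} \<times> {..n}"]) (auto simp: P_def)
    have "card Oc * card Oc \<le> card (P \<union> (\<lambda>a. (a, a)) ` Oc)"
      using card_mono[OF _ OO] finP finO by (simp add: card_cartesian_product)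
    also have "\<dots> \<le> card P + card ((\<lambda>a. (a, a)) ` Oc)" by (rule card_Un_le)
    also have "card ((\<lambda>a. (a, a)) ` Oc) \<le> card Oc" by (rule card_image_le[OF finO])
    finally have cc: "card Oc * card Oc \<le> card (Tset x n {ell..n}) + card Oc" using cardP by linarith
    define c where "c = real (card Oc)"
    have cc': "c * c - c \<le> real (card (Tset x n {ell..n}))"
    proof -
      have "real (card Oc * card Oc) \<le> real (card (Tset x n {ell..n}) + card Oc)" using cc by (simp only: of_nat_le_iff)
      then show ?thesis by (simp add: c_def)
    qed
    have cge: "c \<ge> real ((n - ell) div R)" using occ_count[OF R H, of n] by (simp add: c_def Oc_def)
    have "real ((n - ell) div R) \<ge> real (n - ell) / r - 1"
    proof -
      have "real (n - ell) = real ((n - ell) div R) * r + real ((n - ell) mod R)"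
        unfolding r_def by (metis div_mult_mod_eq of_nat_add of_nat_mult)
      moreover have "real ((n - ell) mod R) < r" using R by (simp add: r_def)
      ultimately have "real (n - ell) < (real ((n - ell) div R) + 1) * r" by (simp add: algebra_simps)
      then show ?thesis using rp by (simp add: field_simps)
    qed
    moreover have "real (n - ell) = real n - real ell"
    proof -
      have "real ell \<le> real n" using n rp by linarith
      then have "ell \<le> n" by simp
      then show ?thesis by (simp add: of_nat_diff)
    qed
    ultimately have c1: "c \<ge> (real n - real ell) / r - 1" using cge by (metis order_trans)
    define y where "y = real n / (2 * r) + 1"
    have "(real n - real ell) / r - 1 - y = (real n - 2 * real ell - 4 * r) / (2 * r)"
      using rp by (simp add: y_def field_simps)
    also have "\<dots> \<ge> 0" using n rp by (intro divide_nonneg_pos) auto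
    finally have cy: "c \<ge> y" using c1 by linarith
    have y1: "y \<ge> 1" using rp by (simp add: y_def)
    have "c * c - c - (y * y - y) = (c - y) * (c + y - 1)" by (simp add: algebra_simps)
    also have "\<dots> \<ge> 0" using cy y1 by (intro mult_nonneg_nonneg) auto
    finally have cyy: "c * c - c \<ge> y * y - y" by simp
    have "y * y - y = (real n / (2 * r)) * (real n / (2 * r) + 1)" by (simp add: y_def algebra_simps)
    also have "\<dots> \<ge> (real n / (2 * r)) * (real n / (2 * r))"
      using rp by (intro mult_left_mono) auto
    also have "(real n / (2 * r)) * (real n / (2 * r)) = real n ^ 2 / (4 * r ^ 2)"
      using rp by (simp add: field_simps power2_eq_square)
    finally have yy: "y * y - y \<ge> real n ^ 2 / (4 * r ^ 2)" .
    have dpos: "real n ^ 2 - real n > 0"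
    proof -
      have "real n > 1" using n rp by linarith
      then have "real n * 1 < real n * real n" by (intro mult_strict_left_mono) auto
      then show ?thesis by (simp add: power2_eq_square)
    qed
    have "(real n ^ 2 - real n) / (4 * r ^ 2) \<le> real n ^ 2 / (4 * r ^ 2)"
      using rp by (intro divide_right_mono) auto
    also have "\<dots> \<le> real (card (Tset x n {ell..n}))" using yy cyy cc' by linarith
    finally have "(real n ^ 2 - real n) / (4 * r ^ 2) \<le> real (card (Tset x n {ell..n}))" .
    then have "1 / (4 * r ^ 2) * (real n ^ 2 - real n) \<le> real (card (Tset x n {ell..n}))" by simp
    then show ?thesis unfolding RR_fin_eq using dpos by (simp add: pos_le_divide_eq)
  qed
  obtain N :: nat where N: "real N \<ge> 2 * real ell + 4 * r + 2" by (meson real_arch_simple)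
  show ?thesis
  proof (intro exI conjI allI impI)
    show "0 < 1 / (4 * r ^ 2)" using rp by simp
    fix n assume "N \<le> n"
    then have "real n \<ge> 2 * real ell + 4 * r + 2" using N by linarith
    then show "1 / (4 * r ^ 2) \<le> RR_fin x ell n" by (rule bound)
  qed
qed


theorem proposition3p6:
  fixes \<zeta> :: "bool \<Rightarrow> bool list" and q :: nat and x :: "nat \<Rightarrow> bool" and ell :: nat
  assumes "q \<ge> 2" and "const_length \<zeta> q"
    and "primitive_subst \<zeta>" and "aperiodic_subst \<zeta>"
    and "hd (\<zeta> False) = False"
    and "is_fixed_point_of_0 \<zeta> x"
    and "ell \<ge> 1"
  shows "\<exists>L. (\<lambda>n. RR_fin x ell n) \<longlonglongrightarrow> L \<and>
             (\<lambda>m. real (m + ell) * asymp_density (K_set x (m + ell))) sums L \<and>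
             L > 0"
proof -
  interpret sfp \<zeta> q x using assms by (unfold_locales) auto
  have H1: "\<forall>w. \<exists>A. (\<lambda>n. real (cntw x w n) / real n) \<longlonglongrightarrow> A" using freq by blast
  have H2: "\<forall>g. \<exists>h. \<forall>a p. 0 < p \<longrightarrow> p < g \<longrightarrow> \<not> (\<forall>k<h. x (a + k) = x (a + k + p))"
    using bounded_runs by blast
  have H3: "\<exists>R>0. \<forall>s. \<exists>i. s \<le> i \<and> i < s + R \<and> (\<forall>k<ell. x (i + k) = x k)" by (rule UR)
  define f where "f = (\<lambda>m. real (m + ell) * dens x (m + ell))"
  have sf: "summable f" and conv: "(\<lambda>n. RR_fin x ell n) \<longlonglongrightarrow> suminf f"
    using RR_conv[OF H1 H2, of ell] unfolding f_def by auto
  have feq: "(\<lambda>m. real (m + ell) * asymp_density (K_set x (m + ell))) = f"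
    by (rule ext) (simp add: f_def asymp_density_K[OF H1])
  obtain c N where c: "c > 0" "\<forall>n\<ge>N. c \<le> RR_fin x ell n" using RR_pos[OF assms(7) H3] by blast
  have "c \<le> suminf f" by (rule LIMSEQ_le_const[OF conv]) (use c in blast)
  then have "suminf f > 0" using c by simp
  then show ?thesis using conv summable_sums[OF sf] feq by auto
qed


end
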